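(* Let $E$ be a sequentially complete locally convex space, $A$ a closed linear operator on $E$, $0<\tau\le\infty$ and $n\in\mathbb N_0$. (i) Suppose that for every $x\in D(A^n)$ the abstract Cauchy problem $(ACP_1)$ has a unique mild solution $u(\cdot;x)$ on $[0,\tau)$. Then $A$ is stationary dense and $n(A)\le n$. (ii) Suppose that $A$ generates a locally equicontinuous $n$-times integrated semigroup $(S_n(t))_{t\in[0,\tau)}$ on $E$. Then $A$ is stationary dense and $n(A)\le n$.
   Context: $E$ is a Hausdorff sequentially complete locally convex space whose topology is given by a family $\circledast$ of continuous seminorms. For a closed linear operator $A$ on $E$, $D(A^m)$ denotes the domain of the $m$-th power of $A$. $A$ is called stationary dense if $$n(A):=\inf\{k\in\mathbb N_0:\ D(A^m)\subseteq\overline{D(A^{m+1})}\ \text{for all } m\ge k\}<\infty .$$ The abstract Cauchy problem $(ACP_1)$ is: find $u\in C([0,\tau):[D(A)])\cap C^1([0,\tau):E)$ with $u'(t)=Au(t)$ for $t\in[0,\tau)$ and $u(0)=x$. A mild solution of $(ACP_1)$ is a continuous function $u(\cdot;x):[0,\tau)\to E$ such that $\int_0^t u(s;x)\,ds\in D(A)$ and $A\int_0^t u(s;x)\,ds=u(t;x)-x$ for all $t\in[0,\tau)$. A locally equicontinuous $n$-times integrated semigroup generated by $A$ is a strongly continuous family $(S_n(t))_{t\in[0,\tau)}$ of continuous linear operators on $E$, equicontinuous on every compact subinterval of $[0,\tau)$, with $S_n(t)A\subseteq AS_n(t)$, such that for all $x\in E$ and $t\in[0,\tau)$, $\int_0^tS_n(s)x\,ds\in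 D(A)$ and $A\int_0^tS_n(s)x\,ds=S_n(t)x-\frac{t^n}{n!}x$, and $A$ is the (integral) generator of this family. *)

theory Defs
  imports "HOL-Analysis.Analysis"
begin

definition seminorm :: "('a::real_vector \<Rightarrow> real) \<Rightarrow> bool" where
  "seminorm p \<longleftrightarrow> (\<forall>x y. p (x + y) \<le> p x + p y) \<and> (\<forall>c x. p (c *\<^sub>R x) = \<bar>c\<bar> * p x)"

definition lcs_top :: "('a::real_vector \<Rightarrow> real) set \<Rightarrow> 'a topology" where
  "lcs_top P = topology_generated_by
     (insert UNIV {{y. p (y - x) < e} | p x e. p \<in> P \<and> e > 0})"

definition seq_complete_lcs :: "('a::real_vector \<Rightarrow> real) set \<Rightarrow> bool" where
  "seq_complete_lcs P \<longleftrightarrow>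
     (\<forall>xs::nat \<Rightarrow> 'a. (\<forall>p\<in>P. \<forall>e>0. \<exists>N. \<forall>m\<ge>N. \<forall>k\<ge>N. p (xs m - xs k) < e)
        \<longrightarrow> (\<exists>x. limitin (lcs_top P) xs x sequentially))"

definition sc_lcs :: "('a::real_vector \<Rightarrow> real) set \<Rightarrow> bool" where
  "sc_lcs P \<longleftrightarrow> (\<forall>p\<in>P. seminorm p) \<and> Hausdorff_space (lcs_top P) \<and> seq_complete_lcs P"

definition has_lcs_integral ::
  "('a::real_vector \<Rightarrow> real) set \<Rightarrow> (real \<Rightarrow> 'a) \<Rightarrow> real \<Rightarrow> real \<Rightarrow> 'a \<Rightarrow> bool" where
  "has_lcs_integral P f a b I \<longleftrightarrow>
     (\<forall>p\<in>P. \<forall>e>0. \<exists>d>0. \<forall>D. D tagged_division_of {a..b} \<and> (\<lambda>x. ball x d) fine D \<longrightarrow>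
        p ((\<Sum>(x,K)\<in>D. Henstock_Kurzweil_Integration.content K *\<^sub>R f x) - I) < e)"

definition closed_linear_op :: "('a::real_vector \<Rightarrow> real) set \<Rightarrow> 'a set \<Rightarrow> ('a \<Rightarrow> 'a) \<Rightarrow> bool" where
  "closed_linear_op P D A \<longleftrightarrow> subspace D
     \<and> (\<forall>x\<in>D. \<forall>y\<in>D. A (x + y) = A x + A y)
     \<and> (\<forall>c. \<forall>x\<in>D. A (c *\<^sub>R x) = c *\<^sub>R A x)
     \<and> closedin (prod_topology (lcs_top P) (lcs_top P)) {(x, A x) | x. x \<in> D}"

fun dom_pow :: "'a set \<Rightarrow> ('a \<Rightarrow> 'a) \<Rightarrow> nat \<Rightarrow> 'a set" where
  "dom_pow D A 0 = UNIV"
| "dom_pow D A (Suc m) = {x \<in> D. A x \<in> dom_pow D A m}"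

definition sd_indices :: "('a::real_vector \<Rightarrow> real) set \<Rightarrow> 'a set \<Rightarrow> ('a \<Rightarrow> 'a) \<Rightarrow> nat set" where
  "sd_indices P D A = {k. \<forall>m\<ge>k. dom_pow D A m \<subseteq> (lcs_top P) closure_of (dom_pow D A (Suc m))}"

definition stationary_dense :: "('a::real_vector \<Rightarrow> real) set \<Rightarrow> 'a set \<Rightarrow> ('a \<Rightarrow> 'a) \<Rightarrow> bool" where
  "stationary_dense P D A \<longleftrightarrow> sd_indices P D A \<noteq> {}"

text \<open>n(A) (meaningful when A is stationary dense)\<close>
definition n_index :: "('a::real_vector \<Rightarrow> real) set \<Rightarrow> 'a set \<Rightarrow> ('a \<Rightarrow> 'a) \<Rightarrow> nat" where
  "n_index P D A = Inf (sd_indices P D A)"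

definition Tint :: "ereal \<Rightarrow> real set" where
  "Tint \<tau> = {t. 0 \<le> t \<and> ereal t < \<tau>}"

definition mild_solution ::
  "('a::real_vector \<Rightarrow> real) set \<Rightarrow> 'a set \<Rightarrow> ('a \<Rightarrow> 'a) \<Rightarrow> ereal \<Rightarrow> 'a \<Rightarrow> (real \<Rightarrow> 'a) \<Rightarrow> bool" where
  "mild_solution P D A \<tau> x u \<longleftrightarrow>
     continuous_map (subtopology euclideanreal (Tint \<tau>)) (lcs_top P) u
     \<and> (\<forall>t\<in>Tint \<tau>. \<exists>I. has_lcs_integral P u 0 t I \<and> I \<in> D \<and> A I = u t - x)"

definition unique_mild_solution ::
  "('a::real_vector \<Rightarrow> real) set \<Rightarrow> 'a set \<Rightarrow> ('a \<Rightarrow> 'a) \<Rightarrow> ereal \<Rightarrow> 'a \<Rightarrow> bool" where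
  "unique_mild_solution P D A \<tau> x \<longleftrightarrow>
     (\<exists>u. mild_solution P D A \<tau> x u \<and>
        (\<forall>v. mild_solution P D A \<tau> x v \<longrightarrow> (\<forall>t\<in>Tint \<tau>. v t = u t)))"

definition loc_equicont_int_semigroup ::
  "('a::real_vector \<Rightarrow> real) set \<Rightarrow> 'a set \<Rightarrow> ('a \<Rightarrow> 'a) \<Rightarrow> ereal \<Rightarrow> nat \<Rightarrow> (real \<Rightarrow> 'a \<Rightarrow> 'a) \<Rightarrow> bool" where
  "loc_equicont_int_semigroup P D A \<tau> n S \<longleftrightarrow>
     \<comment> \<open>continuous linear operators\<close>
     (\<forall>t\<in>Tint \<tau>. linear (S t) \<and> continuous_map (lcs_top P) (lcs_top P) (S t))
     \<comment> \<open>strong continuity\<close>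
     \<and> (\<forall>x. continuous_map (subtopology euclideanreal (Tint \<tau>)) (lcs_top P) (\<lambda>t. S t x))
     \<comment> \<open>equicontinuity on compact subintervals [0,b]\<close>
     \<and> (\<forall>b\<in>Tint \<tau>. \<forall>V. openin (lcs_top P) V \<and> 0 \<in> V \<longrightarrow>
          (\<exists>U. openin (lcs_top P) U \<and> 0 \<in> U \<and> (\<forall>t\<in>{0..b}. S t ` U \<subseteq> V)))
     \<comment> \<open>S(t) A \<subseteq> A S(t)\<close>
     \<and> (\<forall>t\<in>Tint \<tau>. \<forall>x\<in>D. S t x \<in> D \<and> A (S t x) = S t (A x))
     \<comment> \<open>integral equation\<close>
     \<and> (\<forall>t\<in>Tint \<tau>. \<forall>x. \<exists>I. has_lcs_integral P (\<lambda>s. S s x) 0 t I \<and> I \<in> D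
          \<and> A I = S t x - (t ^ n / fact n) *\<^sub>R x)
     \<comment> \<open>A is the integral generator of S\<close>
     \<and> (\<forall>x y. (x \<in> D \<and> y = A x) \<longleftrightarrow>
          (\<forall>t\<in>Tint \<tau>. has_lcs_integral P (\<lambda>s. S s y) 0 t (S t x - (t ^ n / fact n) *\<^sub>R x)))"

end

theory Submission
  imports Defs
begin

lemma sn_scale: "seminorm p \<Longrightarrow> p (c *\<^sub>R x) = \<bar>c\<bar> * p x"
  unfolding seminorm_def by blast

lemma sn_zero: "seminorm p \<Longrightarrow> p 0 = 0"
  using sn_scale[of p 0 0] by simp

lemma sn_neg: "seminorm p \<Longrightarrow> p (- x) = p x"
  using sn_scale[of p "-1" x] by simp

lemma sn_add: "seminorm p \<Longrightarrow> p (x + y) \<le> p x + p y"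
  unfolding seminorm_def by blast

lemma sn_nonneg: "seminorm p \<Longrightarrow> p x \<ge> 0"
proof -
  assume s: "seminorm p"
  have "p (x + - x) \<le> p x + p (- x)" by (rule sn_add[OF s])
  then show ?thesis using sn_zero[OF s] sn_neg[OF s] by simp
qed

lemma sn_diff: "seminorm p \<Longrightarrow> p (x - y) \<le> p x + p y"
  using sn_add[of p x "- y"] sn_neg[of p y] by simp

lemma sn_tri: "seminorm p \<Longrightarrow> p (x - z) \<le> p (x - y) + p (y - z)"
  using sn_add[of p "x - y" "y - z"] by simp

lemma sn_commute: "seminorm p \<Longrightarrow> p (x - y) = p (y - x)"
  using sn_neg[of p "x - y"] by simp

lemma sn_sum: "seminorm p \<Longrightarrow> p (sum f S) \<le> (\<Sum>i\<in>S. p (f i))"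
proof (induction S rule: infinite_finite_induct)
  case (infinite A) then show ?case by (simp add: sn_zero)
next
  case empty then show ?case by (simp add: sn_zero)
next
  case (insert x F)
  then show ?case using sn_add[OF insert(4), of "f x" "sum f F"] by simp
qed

lemma topspace_lcs[simp]: "topspace (lcs_top P) = UNIV"
  unfolding lcs_top_def by auto

lemma openin_lcs_ball:
  assumes "p \<in> P" "e > 0"
  shows "openin (lcs_top P) {y. p (y - x) < e}"
  unfolding lcs_top_def
  by (rule topology_generated_by_Basis) (use assms in blast)

lemma limitin_lcsI:
  assumes sn: "\<forall>p\<in>P. seminorm p"
    and h: "\<And>p e. p \<in> P \<Longrightarrow> e > 0 \<Longrightarrow> eventually (\<lambda>k. p (f k - l) < e) F"
  shows "limitin (lcs_top P) f l F"
proof -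
  have "generate_topology_on (insert UNIV {{y. p (y - x) < e} | p x e. p \<in> P \<and> e > 0}) U
        \<Longrightarrow> l \<in> U \<Longrightarrow> eventually (\<lambda>k. f k \<in> U) F" for U
  proof (induction rule: generate_topology_on.induct)
    case Empty then show ?case by simp
  next
    case (Int a b) then show ?case by (auto intro: eventually_conj)
  next
    case (UN K)
    then obtain k where "k \<in> K" "l \<in> k" by blast
    with UN have "eventually (\<lambda>x. f x \<in> k) F" by blast
    then show ?case by (rule eventually_mono) (use \<open>k \<in> K\<close> in blast)
  next
    case (Basis s)
    show ?case
    proof (cases "s = UNIV")
      case True then show ?thesis by simp
    next
      case False
      with Basis obtain p x e where s: "s = {y. p (y - x) < e}" "p \<in> P" "e > 0" by blast
      with Basis have lx: "p (l - x) < e" by auto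
      have "eventually (\<lambda>k. p (f k - l) < e - p (l - x)) F"
        using h[OF s(2)] lx by simp
      then show ?thesis
      proof (rule eventually_mono)
        fix k assume "p (f k - l) < e - p (l - x)"
        then show "f k \<in> s" using sn_tri[of p "f k" x l] sn s by auto
      qed
    qed
  qed
  then show ?thesis
    unfolding limitin_def topspace_lcs unfolding lcs_top_def openin_topology_generated_by_iff
    by blast
qed

lemma sc_lcs_sn: "sc_lcs P \<Longrightarrow> p \<in> P \<Longrightarrow> seminorm p"
  unfolding sc_lcs_def by blast

lemma sc_lcs_sep:
  assumes "sc_lcs P" "\<And>p. p \<in> P \<Longrightarrow> p z = 0"
  shows "z = 0"
proof -
  have sn: "\<forall>p\<in>P. seminorm p" using assms(1) sc_lcs_def by blast
  have "limitin (lcs_top P) (\<lambda>k::nat. z) z sequentially"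
    by (rule limitin_lcsI[OF sn]) (simp add: sn_zero sn)
  moreover have "limitin (lcs_top P) (\<lambda>k::nat. z) 0 sequentially"
    by (rule limitin_lcsI[OF sn]) (simp add: assms(2))
  moreover have "Hausdorff_space (lcs_top P)" using assms(1) sc_lcs_def by blast
  ultimately show ?thesis
    using limitin_Hausdorff_unique[of "lcs_top P" "\<lambda>k::nat. z" z sequentially 0] by simp
qed

lemma sc_lcs_eq:
  assumes "sc_lcs P" "\<And>p e. p \<in> P \<Longrightarrow> e > 0 \<Longrightarrow> p (a - b) < e"
  shows "a = b"
proof -
  have "p (a - b) = 0" if "p \<in> P" for p
  proof -
    have "\<not> p (a - b) > 0" using assms(2)[OF that, of "p (a - b)"] by auto
    then show ?thesis using sn_nonneg[OF sc_lcs_sn[OF assms(1) that], of "a - b"] by linarith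
  qed
  then show ?thesis using sc_lcs_sep[OF assms(1)] by force
qed

lemma cont_sn:
  assumes sn: "\<forall>p\<in>P. seminorm p"
    and c: "continuous_map (subtopology euclideanreal T) (lcs_top P) u"
    and "s \<in> T" "p \<in> P" "e > 0"
  shows "\<exists>d>0. \<forall>s'\<in>T. \<bar>s' - s\<bar> < d \<longrightarrow> p (u s' - u s) < e"
proof -
  have "openin (subtopology euclideanreal T) {x \<in> topspace (subtopology euclideanreal T). u x \<in> {y. p (y - u s) < e}}"
    using c openin_lcs_ball[OF assms(4,5)] unfolding continuous_map_def by blast
  then have "openin (subtopology euclideanreal T) {x \<in> T. p (u x - u s) < e}" by simp
  then obtain V where V: "open V" "{x \<in> T. p (u x - u s) < e} = T \<inter> V"
    by (auto simp: openin_subtopology)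
  have "s \<in> V" using V assms sn_zero[of p] sn by auto
  then obtain d where "d > 0" "ball s d \<subseteq> V" using V(1) open_contains_ball by blast
  moreover have "p (u s' - u s) < e" if "s' \<in> T" "\<bar>s' - s\<bar> < d" for s'
  proof -
    have "s' \<in> ball s d" using that by (simp add: dist_real_def)
    then have "s' \<in> T \<inter> V" using \<open>ball s d \<subseteq> V\<close> that by blast
    then show ?thesis using V(2) by blast
  qed
  ultimately show ?thesis by blast
qed

abbreviation rsum :: "(real \<times> real set) set \<Rightarrow> (real \<Rightarrow> 'a::real_vector) \<Rightarrow> 'a" where
  "rsum D f \<equiv> (\<Sum>(x,K)\<in>D. Henstock_Kurzweil_Integration.content K *\<^sub>R f x)"

lemma fine_ball_mono:
  assumes "(\<lambda>x. ball x d) fine D" "d \<le> d'" shows "(\<lambda>x. ball x d') fine D"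
  unfolding fine_def
proof (rule ballI)
  fix xK assume xK: "xK \<in> D"
  obtain x K where e: "xK = (x, K)" by fastforce
  then have "K \<subseteq> ball x d" using assms(1) xK by (auto simp: fine_def)
  then show "case xK of (x, k) \<Rightarrow> k \<subseteq> ball x d'" using subset_ball[OF assms(2)] e by auto
qed

lemma hliD:
  assumes "has_lcs_integral P f a b I" "p \<in> P" "e > 0"
  obtains d where "d > 0" "\<And>D. D tagged_division_of {a..b} \<Longrightarrow> (\<lambda>x. ball x d) fine D \<Longrightarrow> p (rsum D f - I) < e"
proof -
  have h: "\<forall>p\<in>P. \<forall>e>0. \<exists>d>0. \<forall>D. D tagged_division_of {a..b} \<and> (\<lambda>x. ball x d) fine D \<longrightarrow>
        p (rsum D f - I) < e" using assms(1) unfolding has_lcs_integral_def .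
  obtain d where "d > 0" "\<forall>D. D tagged_division_of {a..b} \<and> (\<lambda>x. ball x d) fine D \<longrightarrow> p (rsum D f - I) < e"
    using h assms(2,3) by meson
  then show thesis using that by simp
qed

lemma exists_fine:
  assumes "d > 0"
  obtains D where "D tagged_division_of {a..b::real}" "(\<lambda>x. ball x d) fine D"
  using fine_division_exists_real[of "\<lambda>x. ball x d" a b] assms by (auto simp: gauge_ball)

lemma hli_unique:
  assumes sc: "sc_lcs P" and h1: "has_lcs_integral P f a b I" and h2: "has_lcs_integral P f a b J"
  shows "I = J"
proof (rule sc_lcs_eq[OF sc])
  fix p e assume p: "p \<in> P" and e: "(e::real) > 0"
  have sn: "seminorm p" using sc p by (rule sc_lcs_sn)
  obtain d1 where d1: "d1 > 0" "\<And>D. D tagged_division_of {a..b} \<Longrightarrow> (\<lambda>x. ball x d1) fine D \<Longrightarrow> p (rsum D f - I) < e/2"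
    using hliD[OF h1 p, of "e/2"] e by (metis half_gt_zero)
  obtain d2 where d2: "d2 > 0" "\<And>D. D tagged_division_of {a..b} \<Longrightarrow> (\<lambda>x. ball x d2) fine D \<Longrightarrow> p (rsum D f - J) < e/2"
    using hliD[OF h2 p, of "e/2"] e by (metis half_gt_zero)
  obtain D where D: "D tagged_division_of {a..b}" "(\<lambda>x. ball x (min d1 d2)) fine D"
    using exists_fine[of "min d1 d2" a b] d1 d2 by auto
  have "p (rsum D f - I) < e/2" using d1(2)[OF D(1) fine_ball_mono[OF D(2)]] by simp
  moreover have "p (rsum D f - J) < e/2" using d2(2)[OF D(1) fine_ball_mono[OF D(2)]] by simp
  moreover have "p (I - J) \<le> p (I - rsum D f) + p (rsum D f - J)" by (rule sn_tri[OF sn])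
  moreover have "p (I - rsum D f) = p (rsum D f - I)" by (rule sn_commute[OF sn])
  ultimately show "p (I - J) < e" by linarith
qed

lemma rsum_cong:
  assumes "D tagged_division_of {a..b}" "\<And>s. s \<in> {a..b} \<Longrightarrow> f s = g s"
  shows "rsum D f = rsum D g"
proof (rule sum.cong[OF refl])
  fix xK assume "xK \<in> D"
  moreover obtain x K where "xK = (x, K)" by fastforce
  ultimately have "x \<in> {a..b}" using tagged_division_ofD(2,3)[OF assms(1)] by blast
  then show "(case xK of (x, K) \<Rightarrow> Henstock_Kurzweil_Integration.content K *\<^sub>R f x) = (case xK of (x, K) \<Rightarrow> Henstock_Kurzweil_Integration.content K *\<^sub>R g x)"
    using assms(2) \<open>xK = (x, K)\<close> by simp
qed

lemma hli_cong:
  assumes "has_lcs_integral P f a b I" "\<And>s. s \<in> {a..b} \<Longrightarrow> f s = g s"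
  shows "has_lcs_integral P g a b I"
  unfolding has_lcs_integral_def
proof (intro ballI allI impI)
  fix p e assume p: "p \<in> P" and e: "(e::real) > 0"
  obtain d where d: "d > 0" "\<And>D. D tagged_division_of {a..b} \<Longrightarrow> (\<lambda>x. ball x d) fine D \<Longrightarrow> p (rsum D f - I) < e"
    using hliD[OF assms(1) p e] by blast
  show "\<exists>d>0. \<forall>D. D tagged_division_of {a..b} \<and> (\<lambda>x. ball x d) fine D \<longrightarrow> p (rsum D g - I) < e"
  proof (intro exI[of _ d] conjI allI impI)
    fix D assume D: "D tagged_division_of {a..b} \<and> (\<lambda>x. ball x d) fine D"
    have "rsum D f = rsum D g" using D assms(2) by (intro rsum_cong) auto
    then show "p (rsum D g - I) < e" using d(2) D by metis
  qed (rule d(1))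
qed

lemma rsum_add: "rsum D (\<lambda>s. f s + g s) = rsum D f + rsum D g"
  unfolding split_beta by (simp add: scaleR_add_right sum.distrib)

lemma rsum_scale: "rsum D (\<lambda>s. c *\<^sub>R f s) = c *\<^sub>R rsum D f"
  by (simp add: scaleR_sum_right case_prod_unfold mult.commute)

lemma rsum_diff: "rsum D (\<lambda>s. f s - g s) = rsum D f - rsum D g"
  unfolding split_beta by (simp add: scaleR_diff_right sum_subtractf)

lemma hli_add:
  assumes sn: "\<forall>p\<in>P. seminorm p" and h1: "has_lcs_integral P f a b I" and h2: "has_lcs_integral P g a b J"
  shows "has_lcs_integral P (\<lambda>s. f s + g s) a b (I + J)"
  unfolding has_lcs_integral_def
proof (intro ballI allI impI)
  fix p e assume p: "p \<in> P" and e: "(e::real) > 0"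
  obtain d1 where d1: "d1 > 0" "\<And>D. D tagged_division_of {a..b} \<Longrightarrow> (\<lambda>x. ball x d1) fine D \<Longrightarrow> p (rsum D f - I) < e/2"
    using hliD[OF h1 p, of "e/2"] e by (metis half_gt_zero)
  obtain d2 where d2: "d2 > 0" "\<And>D. D tagged_division_of {a..b} \<Longrightarrow> (\<lambda>x. ball x d2) fine D \<Longrightarrow> p (rsum D g - J) < e/2"
    using hliD[OF h2 p, of "e/2"] e by (metis half_gt_zero)
  show "\<exists>d>0. \<forall>D. D tagged_division_of {a..b} \<and> (\<lambda>x. ball x d) fine D \<longrightarrow>
          p (rsum D (\<lambda>s. f s + g s) - (I + J)) < e"
  proof (intro exI[of _ "min d1 d2"] conjI allI impI)
    show "min d1 d2 > 0" using d1 d2 by simp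
    fix D assume D: "D tagged_division_of {a..b} \<and> (\<lambda>x. ball x (min d1 d2)) fine D"
    have "p (rsum D f - I) < e/2" using d1(2) D fine_ball_mono by (metis min.cobounded1)
    moreover have "p (rsum D g - J) < e/2" using d2(2) D fine_ball_mono by (metis min.cobounded2)
    moreover have eq: "rsum D (\<lambda>s. f s + g s) - (I + J) = (rsum D f - I) + (rsum D g - J)"
      by (simp only: rsum_add) (simp add: algebra_simps)
    moreover have "p (rsum D (\<lambda>s. f s + g s) - (I + J)) \<le> p (rsum D f - I) + p (rsum D g - J)"
      unfolding eq using sn_add sn p by blast
    ultimately show "p (rsum D (\<lambda>s. f s + g s) - (I + J)) < e" by linarith
  qed
qed

lemma hli_scale:
  assumes sn: "\<forall>p\<in>P. seminorm p" and h1: "has_lcs_integral P f a b I"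
  shows "has_lcs_integral P (\<lambda>s. c *\<^sub>R f s) a b (c *\<^sub>R I)"
  unfolding has_lcs_integral_def
proof (intro ballI allI impI)
  fix p e assume p: "p \<in> P" and e: "(e::real) > 0"
  obtain d1 where d1: "d1 > 0" "\<And>D. D tagged_division_of {a..b} \<Longrightarrow> (\<lambda>x. ball x d1) fine D \<Longrightarrow> p (rsum D f - I) < e/(\<bar>c\<bar>+1)"
  proof -
    have "e/(\<bar>c\<bar>+1) > 0" using e by (simp add: add_pos_nonneg)
    then show thesis using hliD[OF h1 p] that by blast
  qed
  show "\<exists>d>0. \<forall>D. D tagged_division_of {a..b} \<and> (\<lambda>x. ball x d) fine D \<longrightarrow>
          p (rsum D (\<lambda>s. c *\<^sub>R f s) - c *\<^sub>R I) < e"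
  proof (intro exI[of _ d1] conjI allI impI)
    show "d1 > 0" using d1 by simp
    fix D assume D: "D tagged_division_of {a..b} \<and> (\<lambda>x. ball x d1) fine D"
    have 1: "p (rsum D f - I) < e/(\<bar>c\<bar>+1)" using d1(2) D by blast
    have "rsum D (\<lambda>s. c *\<^sub>R f s) - c *\<^sub>R I = c *\<^sub>R (rsum D f - I)"
      by (simp only: rsum_scale) (simp add: algebra_simps)
    then have "p (rsum D (\<lambda>s. c *\<^sub>R f s) - c *\<^sub>R I) = \<bar>c\<bar> * p (rsum D f - I)"
      using sn_scale[of p c "rsum D f - I"] sn p by simp
    also have "\<dots> \<le> (\<bar>c\<bar>+1) * p (rsum D f - I)"
      using sn_nonneg[of p] sn p by (simp add: mult_right_mono)
    also have "\<dots> < (\<bar>c\<bar>+1) * (e/(\<bar>c\<bar>+1))"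
      using 1 by (intro mult_strict_left_mono) auto
    also have "\<dots> = e" by simp
    finally show "p (rsum D (\<lambda>s. c *\<^sub>R f s) - c *\<^sub>R I) < e" .
  qed
qed

lemma hli_diff:
  assumes sn: "\<forall>p\<in>P. seminorm p" and h1: "has_lcs_integral P f a b I" and h2: "has_lcs_integral P g a b J"
  shows "has_lcs_integral P (\<lambda>s. f s - g s) a b (I - J)"
proof -
  have e1: "(\<lambda>s. f s + (-1) *\<^sub>R g s) = (\<lambda>s. f s - g s)" by (simp add: fun_eq_iff)
  have e2: "I + (-1) *\<^sub>R J = I - J" by simp
  show ?thesis using hli_add[OF sn h1 hli_scale[OF sn h2, of "-1"]] unfolding e1 e2 .
qed

lemma hli_bound:
  assumes sn: "seminorm p" and pP: "p \<in> P" and h: "has_lcs_integral P f a b I"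
    and ab: "a \<le> b" and M: "\<And>s. s \<in> {a..b} \<Longrightarrow> p (f s) \<le> M"
  shows "p I \<le> M * (b - a)"
proof (rule field_le_epsilon)
  fix e :: real assume e: "e > 0"
  obtain d where d: "d > 0" "\<And>D. D tagged_division_of {a..b} \<Longrightarrow> (\<lambda>x. ball x d) fine D \<Longrightarrow> p (rsum D f - I) < e"
    using hliD[OF h pP e] by blast
  obtain D where D: "D tagged_division_of {a..b}" "(\<lambda>x. ball x d) fine D"
    using exists_fine[OF d(1)] by auto
  have fin: "finite D" using D(1) by blast
  have "p (rsum D f) \<le> (\<Sum>(x,K)\<in>D. p (Henstock_Kurzweil_Integration.content K *\<^sub>R f x))"
  proof -
    have eq: "(\<lambda>i. p (case i of (x,K) \<Rightarrow> Henstock_Kurzweil_Integration.content K *\<^sub>R f x)) = (\<lambda>(x,K). p (Henstock_Kurzweil_Integration.content K *\<^sub>R f x))"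
      by (rule ext) (simp split: prod.split)
    show ?thesis using sn_sum[OF sn, of "\<lambda>(x,K). Henstock_Kurzweil_Integration.content K *\<^sub>R f x" D] unfolding eq .
  qed
  also have "\<dots> \<le> (\<Sum>(x,K)\<in>D. Henstock_Kurzweil_Integration.content K * M)"
  proof (rule sum_mono)
    fix xK assume xK: "xK \<in> D"
    obtain x K where xK': "xK = (x, K)" by fastforce
    have "x \<in> {a..b}" using tagged_division_ofD(2,3)[OF D(1)] xK xK' by blast
    then have Mx: "p (f x) \<le> M" by (rule M)
    have c0: "Henstock_Kurzweil_Integration.content K \<ge> 0" by (rule content_pos_le)
    have "p (Henstock_Kurzweil_Integration.content K *\<^sub>R f x) = Henstock_Kurzweil_Integration.content K * p (f x)"
      using sn_scale[OF sn] c0 by simp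
    also have "\<dots> \<le> Henstock_Kurzweil_Integration.content K * M" using Mx c0 by (rule mult_left_mono)
    finally show "(case xK of (x, K) \<Rightarrow> p (Henstock_Kurzweil_Integration.content K *\<^sub>R f x)) \<le> (case xK of (x, K) \<Rightarrow> Henstock_Kurzweil_Integration.content K * M)"
      using xK' by simp
  qed
  also have "\<dots> = (\<Sum>(x,K)\<in>D. Henstock_Kurzweil_Integration.content K) * M"
    by (simp add: sum_distrib_right case_prod_unfold)
  also have "\<dots> = M * (b - a)"
    using additive_content_tagged_division[of D a b] D(1) ab by simp
  finally have 1: "p (rsum D f) \<le> M * (b - a)" .
  have "p I \<le> p (rsum D f) + p (rsum D f - I)"
    using sn_add[OF sn, of "rsum D f" "I - rsum D f"] sn_commute[OF sn, of "rsum D f" I] by simp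
  then show "p I \<le> M * (b - a) + e" using 1 d(2)[OF D] by linarith
qed


section \<open>Comparison of Riemann sums\<close>

lemma rsum_fs: "rsum D f = (\<Sum>i\<in>D. Henstock_Kurzweil_Integration.content (snd i) *\<^sub>R f (fst i))"
  by (rule sum.cong) (auto simp: split_beta)

lemma ind_box:
  fixes u v c d :: real
  shows "(indicat_real {u..v} has_integral Henstock_Kurzweil_Integration.content ({u..v} \<inter> {c..d})) {c..d}"
proof -
  define M where "M = {u..v} \<inter> {c..d}"
  have M: "M = {max u c..min v d}" unfolding M_def by simp
  have sub: "M \<subseteq> {c..d}" unfolding M_def by blast
  have "((\<lambda>x. 1::real) has_integral Henstock_Kurzweil_Integration.content M *\<^sub>R 1) M"
    unfolding M by (rule has_integral_const_real)
  then have "((\<lambda>x. if x \<in> M then 1::real else 0) has_integral Henstock_Kurzweil_Integration.content M) {c..d}"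
    using has_integral_restrict[OF sub, of "\<lambda>x. 1::real"] by simp
  then show ?thesis
    unfolding M_def by (rule has_integral_eq[rotated]) (auto simp: indicator_def)
qed

lemma content_split_sum:
  fixes a b u v :: real
  assumes D2: "D2 tagged_division_of {a..b}" and K: "{u..v} \<subseteq> {a..b}"
  shows "(\<Sum>j\<in>D2. Henstock_Kurzweil_Integration.content ({u..v} \<inter> snd j)) = Henstock_Kurzweil_Integration.content {u..v}"
proof -
  have "(indicat_real {u..v} has_integral (\<Sum>(x,L)\<in>D2. Henstock_Kurzweil_Integration.content ({u..v} \<inter> L))) {a..b}"
  proof (rule has_integral_combine_tagged_division[OF D2])
    fix x L assume "(x, L) \<in> D2"
    then obtain c d where "L = cbox c d" using tagged_division_ofD(4)[OF D2] by blast
    then have "L = {c..d}" by simp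
    then show "(indicat_real {u..v} has_integral Henstock_Kurzweil_Integration.content ({u..v} \<inter> L)) L"
      using ind_box by simp
  qed
  moreover have "(indicat_real {u..v} has_integral Henstock_Kurzweil_Integration.content ({u..v} \<inter> {a..b})) {a..b}"
    by (rule ind_box)
  moreover have "{u..v} \<inter> {a..b} = {u..v}" using K by blast
  ultimately have "(\<Sum>(x,L)\<in>D2. Henstock_Kurzweil_Integration.content ({u..v} \<inter> L)) = Henstock_Kurzweil_Integration.content {u..v}"
    using has_integral_unique by metis
  then show ?thesis by (simp add: split_beta)
qed

lemma rsum_compare:
  fixes a b :: real
  assumes sn: "seminorm p"
    and D1: "D1 tagged_division_of {a..b}" and D2: "D2 tagged_division_of {a..b}"
    and f1: "(\<lambda>x. ball x d) fine D1" and f2: "(\<lambda>x. ball x d) fine D2"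
    and md: "\<And>s s'. s \<in> {a..b} \<Longrightarrow> s' \<in> {a..b} \<Longrightarrow> \<bar>s - s'\<bar> < 2 * d \<Longrightarrow> p (f s - f s') \<le> \<epsilon>"
    and ab: "a \<le> b"
  shows "p (rsum D1 f - rsum D2 f) \<le> \<epsilon> * (b - a)"
proof -
  let ?c = "Henstock_Kurzweil_Integration.content"
  have fin1: "finite D1" using D1 by blast
  have fin2: "finite D2" using D2 by blast
  have box: "\<exists>u v. snd i = {u..v} \<and> {u..v} \<subseteq> {a..b}" if "i \<in> D1 \<or> i \<in> D2" for i
  proof -
    obtain x K where i: "i = (x, K)" by fastforce
    have "(x, K) \<in> D1 \<or> (x, K) \<in> D2" using that i by simp
    then have "K \<subseteq> {a..b} \<and> (\<exists>u v. K = cbox u v)"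
      using tagged_division_ofD(3,4)[OF D1] tagged_division_ofD(3,4)[OF D2] by blast
    then obtain u v where "K = cbox u v" "K \<subseteq> {a..b}" by blast
    then have "snd i = {u..v} \<and> {u..v} \<subseteq> {a..b}" using i by simp
    then show ?thesis by blast
  qed
  have KI1: "(\<Sum>j\<in>D2. ?c (snd i \<inter> snd j)) = ?c (snd i)" if "i \<in> D1" for i
    using box[of i] that content_split_sum[OF D2] by auto
  have KI2: "(\<Sum>i\<in>D1. ?c (snd i \<inter> snd j)) = ?c (snd j)" if "j \<in> D2" for j
    using box[of j] that content_split_sum[OF D1] by (auto simp: Int_commute)
  have S1: "rsum D1 f = (\<Sum>i\<in>D1. \<Sum>j\<in>D2. ?c (snd i \<inter> snd j) *\<^sub>R f (fst i))"
    unfolding rsum_fs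
  proof (rule sum.cong[OF refl])
    fix i assume "i \<in> D1"
    then show "?c (snd i) *\<^sub>R f (fst i) = (\<Sum>j\<in>D2. ?c (snd i \<inter> snd j) *\<^sub>R f (fst i))"
      using KI1 by (simp add: scaleR_sum_left[symmetric])
  qed
  have S2: "rsum D2 f = (\<Sum>i\<in>D1. \<Sum>j\<in>D2. ?c (snd i \<inter> snd j) *\<^sub>R f (fst j))"
  proof -
    have "rsum D2 f = (\<Sum>j\<in>D2. \<Sum>i\<in>D1. ?c (snd i \<inter> snd j) *\<^sub>R f (fst j))"
      unfolding rsum_fs
    proof (rule sum.cong[OF refl])
      fix j assume "j \<in> D2"
      then show "?c (snd j) *\<^sub>R f (fst j) = (\<Sum>i\<in>D1. ?c (snd i \<inter> snd j) *\<^sub>R f (fst j))"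
        using KI2 by (simp add: scaleR_sum_left[symmetric])
    qed
    then show ?thesis by (simp only: sum.swap[of _ D2 D1])
  qed
  have diff: "rsum D1 f - rsum D2 f = (\<Sum>i\<in>D1. \<Sum>j\<in>D2. ?c (snd i \<inter> snd j) *\<^sub>R (f (fst i) - f (fst j)))"
    unfolding S1 S2 by (simp add: sum_subtractf[symmetric] scaleR_diff_right)
  have trm: "p (?c (snd i \<inter> snd j) *\<^sub>R (f (fst i) - f (fst j))) \<le> ?c (snd i \<inter> snd j) * \<epsilon>"
    if i: "i \<in> D1" and j: "j \<in> D2" for i j
  proof -
    obtain u v where uv: "snd i = {u..v}" "{u..v} \<subseteq> {a..b}" using box[of i] i by blast
    obtain u' v' where uv': "snd j = {u'..v'}" "{u'..v'} \<subseteq> {a..b}" using box[of j] j by blast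
    have c0: "?c (snd i \<inter> snd j) \<ge> 0" unfolding uv uv' Int_atLeastAtMost by (rule content_pos_le)
    have eq: "p (?c (snd i \<inter> snd j) *\<^sub>R (f (fst i) - f (fst j))) = ?c (snd i \<inter> snd j) * p (f (fst i) - f (fst j))"
      using sn_scale[OF sn] c0 by simp
    show ?thesis
    proof (cases "snd i \<inter> snd j = {}")
      case True then show ?thesis using eq by simp
    next
      case False
      then obtain z where z: "z \<in> snd i" "z \<in> snd j" by blast
      have ti: "fst i \<in> snd i" "snd i \<subseteq> ball (fst i) d"
        using tagged_division_ofD(2)[OF D1, of "fst i" "snd i"] f1 i by (auto simp: fine_def split_beta)
      have tj: "fst j \<in> snd j" "snd j \<subseteq> ball (fst j) d"
        using tagged_division_ofD(2)[OF D2, of "fst j" "snd j"] f2 j by (auto simp: fine_def split_beta)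
      have "dist (fst i) z < d" "dist (fst j) z < d" using z ti tj by auto
      then have "\<bar>fst i - fst j\<bar> < 2 * d" by (simp add: dist_real_def)
      moreover have "fst i \<in> {a..b}" "fst j \<in> {a..b}" using ti tj uv uv' by blast+
      ultimately have "p (f (fst i) - f (fst j)) \<le> \<epsilon>" using md by blast
      then show ?thesis using eq c0 by (simp add: mult_left_mono)
    qed
  qed
  have "p (rsum D1 f - rsum D2 f) \<le> (\<Sum>i\<in>D1. p (\<Sum>j\<in>D2. ?c (snd i \<inter> snd j) *\<^sub>R (f (fst i) - f (fst j))))"
    unfolding diff by (rule sn_sum[OF sn])
  also have "\<dots> \<le> (\<Sum>i\<in>D1. \<Sum>j\<in>D2. p (?c (snd i \<inter> snd j) *\<^sub>R (f (fst i) - f (fst j))))"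
    by (rule sum_mono) (rule sn_sum[OF sn])
  also have "\<dots> \<le> (\<Sum>i\<in>D1. \<Sum>j\<in>D2. ?c (snd i \<inter> snd j) * \<epsilon>)"
    by (intro sum_mono trm)
  also have "\<dots> = (\<Sum>i\<in>D1. ?c (snd i) * \<epsilon>)"
    by (rule sum.cong[OF refl]) (simp add: sum_distrib_right[symmetric] KI1)
  also have "\<dots> = (\<Sum>i\<in>D1. ?c (snd i)) * \<epsilon>" by (simp add: sum_distrib_right)
  also have "(\<Sum>i\<in>D1. ?c (snd i)) = b - a"
  proof -
    have "(\<Sum>(x,l)\<in>D1. ?c l) = ?c (cbox a b)" by (rule additive_content_tagged_division) (use D1 in simp)
    then show ?thesis using ab by (simp add: split_beta)
  qed
  finally show ?thesis by (simp add: mult.commute)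
qed


section \<open>Existence of integrals of continuous functions\<close>

lemma unif_cont:
  assumes sn: "\<forall>p\<in>P. seminorm p"
    and c: "continuous_map (subtopology euclideanreal T) (lcs_top P) f"
    and sub: "{a..b} \<subseteq> T" and pP: "p \<in> P" and e: "e > 0"
  shows "\<exists>d>0. \<forall>s\<in>{a..b}. \<forall>s'\<in>{a..b}. \<bar>s - s'\<bar> < d \<longrightarrow> p (f s - f s') < e"
proof -
  have "\<forall>s\<in>{a..b}. \<exists>d>0. \<forall>s'\<in>T. \<bar>s' - s\<bar> < d \<longrightarrow> p (f s' - f s) < e/2"
    using cont_sn[OF sn c _ pP, of _ "e/2"] sub e by auto
  then obtain \<delta> where \<delta>: "\<And>s. s \<in> {a..b} \<Longrightarrow> \<delta> s > 0 \<and> (\<forall>s'\<in>T. \<bar>s' - s\<bar> < \<delta> s \<longrightarrow> p (f s' - f s) < e/2)"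
    using bchoice[of "{a..b}"] by metis
  have cov: "{a..b} \<subseteq> \<Union>((\<lambda>s. ball s (\<delta> s)) ` {a..b})"
    using \<delta> by fastforce
  obtain \<epsilon> where ep: "0 < \<epsilon>" "\<And>x. x \<in> {a..b} \<Longrightarrow> \<exists>G \<in> (\<lambda>s. ball s (\<delta> s)) ` {a..b}. ball x \<epsilon> \<subseteq> G"
    using Heine_Borel_lemma[OF compact_Icc cov] by blast
  show ?thesis
  proof (intro exI[of _ \<epsilon>] conjI ballI impI)
    fix s s' assume s: "s \<in> {a..b}" and s': "s' \<in> {a..b}" and ss: "\<bar>s - s'\<bar> < \<epsilon>"
    obtain s0 where s0: "s0 \<in> {a..b}" "ball s \<epsilon> \<subseteq> ball s0 (\<delta> s0)" using ep(2)[OF s] by blast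
    have "s \<in> ball s \<epsilon>" "s' \<in> ball s \<epsilon>" using ep(1) ss by (auto simp: dist_real_def)
    then have "s \<in> ball s0 (\<delta> s0)" "s' \<in> ball s0 (\<delta> s0)" using s0 by blast+
    then have "\<bar>s - s0\<bar> < \<delta> s0" "\<bar>s' - s0\<bar> < \<delta> s0" by (auto simp: dist_real_def)
    then have "p (f s - f s0) < e/2" "p (f s' - f s0) < e/2" using \<delta>[OF s0(1)] s s' sub by blast+
    moreover have "p (f s - f s') \<le> p (f s - f s0) + p (f s0 - f s')" by (rule sn_tri) (use sn pP in blast)
    moreover have "p (f s0 - f s') = p (f s' - f s0)" by (rule sn_commute) (use sn pP in blast)
    ultimately show "p (f s - f s') < e" by linarith
  qed (rule ep(1))
qed

lemma limitin_lcsD: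
  assumes sn: "\<forall>p\<in>P. seminorm p" and l: "limitin (lcs_top P) f l F" and pP: "p \<in> P" and e: "e > 0"
  shows "eventually (\<lambda>k. p (f k - l) < e) F"
proof -
  have "openin (lcs_top P) {y. p (y - l) < e}" by (rule openin_lcs_ball[OF pP e])
  moreover have "l \<in> {y. p (y - l) < e}" using sn_zero[of p] sn pP e by simp
  ultimately have "eventually (\<lambda>k. f k \<in> {y. p (y - l) < e}) F" using l unfolding limitin_def by blast
  then show ?thesis by simp
qed

lemma div_seq:
  fixes a b :: real
  obtains Dk where "\<And>k. Dk k tagged_division_of {a..b}" "\<And>k. (\<lambda>x. ball x (1 / Suc k)) fine Dk k"
proof -
  have "\<forall>k. \<exists>D. D tagged_division_of {a..b} \<and> (\<lambda>x. ball x (1 / Suc k)) fine D"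
    using exists_fine[of "1 / Suc _" a b] by (metis of_nat_0_less_iff zero_less_Suc divide_pos_pos zero_less_one)
  then obtain Dk where "\<forall>k. Dk k tagged_division_of {a..b} \<and> (\<lambda>x. ball x (1 / Suc k)) fine Dk k"
    by metis
  then show thesis using that by blast
qed

lemma eventually_small:
  fixes d :: real assumes "d > 0"
  shows "eventually (\<lambda>k. 1 / real (Suc k) \<le> d) sequentially"
proof -
  obtain N where N: "inverse (real (Suc N)) < d" using reals_Archimedean[OF assms] by blast
  show ?thesis unfolding eventually_sequentially
  proof (intro exI[of _ N] allI impI)
    fix k assume "k \<ge> N"
    then have "1 / real (Suc k) \<le> 1 / real (Suc N)" by (simp add: frac_le)
    then show "1 / real (Suc k) \<le> d" using N by (simp add: inverse_eq_divide)
  qed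
qed

lemma hli_exists:
  fixes a b :: real
  assumes sc: "sc_lcs P"
    and c: "continuous_map (subtopology euclideanreal T) (lcs_top P) f"
    and sub: "{a..b} \<subseteq> T" and ab: "a \<le> b"
  shows "\<exists>I. has_lcs_integral P f a b I"
proof -
  have sn: "\<forall>p\<in>P. seminorm p" using sc sc_lcs_def by blast
  obtain Dk where Dk: "\<And>k. Dk k tagged_division_of {a..b}" "\<And>k. (\<lambda>x. ball x (1 / Suc k)) fine Dk k"
    using div_seq by blast
  define \<sigma> where "\<sigma> k = rsum (Dk k) f" for k
  have key: "\<exists>\<delta>>0. \<forall>D1 D2. D1 tagged_division_of {a..b} \<and> (\<lambda>x. ball x \<delta>) fine D1 \<and>
              D2 tagged_division_of {a..b} \<and> (\<lambda>x. ball x \<delta>) fine D2 \<longrightarrow> p (rsum D1 f - rsum D2 f) < e"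
    if pP: "p \<in> P" and e: "e > 0" for p e
  proof -
    define \<epsilon> where "\<epsilon> = e / (b - a + 1)"
    have \<epsilon>0: "\<epsilon> > 0" using e ab by (simp add: \<epsilon>_def)
    have \<epsilon>e: "\<epsilon> * (b - a) < e"
    proof -
      have "\<epsilon> * (b - a) < \<epsilon> * (b - a + 1)" using \<epsilon>0 by simp
      also have "\<dots> = e" using ab by (simp add: \<epsilon>_def)
      finally show ?thesis .
    qed
    obtain d where d: "d > 0" "\<forall>s\<in>{a..b}. \<forall>s'\<in>{a..b}. \<bar>s - s'\<bar> < d \<longrightarrow> p (f s - f s') < \<epsilon>"
      using unif_cont[OF sn c sub pP \<epsilon>0] by blast
    show ?thesis
    proof (intro exI[of _ "d/2"] conjI allI impI)
      show "d/2 > 0" using d by simp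
      fix D1 D2 assume D: "D1 tagged_division_of {a..b} \<and> (\<lambda>x. ball x (d/2)) fine D1 \<and>
              D2 tagged_division_of {a..b} \<and> (\<lambda>x. ball x (d/2)) fine D2"
      have "p (rsum D1 f - rsum D2 f) \<le> \<epsilon> * (b - a)"
      proof (rule rsum_compare[of p D1 a b D2 "d/2" f \<epsilon>])
        show "seminorm p" using sn pP by blast
        fix s s' assume h: "s \<in> {a..b}" "s' \<in> {a..b}" "\<bar>s - s'\<bar> < 2 * (d/2)"
        have "\<bar>s - s'\<bar> < d" using h(3) by simp
        then have "p (f s - f s') < \<epsilon>" using d(2) h(1,2) by blast
        then show "p (f s - f s') \<le> \<epsilon>" by simp
      qed (use D ab in auto)
      then show "p (rsum D1 f - rsum D2 f) < e" using \<epsilon>e by linarith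
    qed
  qed
  have cauchy: "\<forall>p\<in>P. \<forall>e>0. \<exists>N. \<forall>m\<ge>N. \<forall>k\<ge>N. p (\<sigma> m - \<sigma> k) < e"
  proof (intro ballI allI impI)
    fix p and e :: real assume pP: "p \<in> P" and e: "e > 0"
    obtain \<delta> where \<delta>: "\<delta> > 0" "\<forall>D1 D2. D1 tagged_division_of {a..b} \<and> (\<lambda>x. ball x \<delta>) fine D1 \<and>
              D2 tagged_division_of {a..b} \<and> (\<lambda>x. ball x \<delta>) fine D2 \<longrightarrow> p (rsum D1 f - rsum D2 f) < e"
      using key[OF pP e] by blast
    obtain N where N: "\<forall>k\<ge>N. 1 / real (Suc k) \<le> \<delta>"
      using eventually_small[OF \<delta>(1)] unfolding eventually_sequentially by blast
    show "\<exists>N. \<forall>m\<ge>N. \<forall>k\<ge>N. p (\<sigma> m - \<sigma> k) < e"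
    proof (intro exI[of _ N] allI impI)
      fix m k assume "m \<ge> N" "k \<ge> N"
      then have "(\<lambda>x. ball x \<delta>) fine Dk m" "(\<lambda>x. ball x \<delta>) fine Dk k"
        using N fine_ball_mono Dk(2) by blast+
      then show "p (\<sigma> m - \<sigma> k) < e" using \<delta>(2) Dk(1) unfolding \<sigma>_def by blast
    qed
  qed
  then obtain I where I: "limitin (lcs_top P) \<sigma> I sequentially"
    using sc unfolding sc_lcs_def seq_complete_lcs_def by blast
  have "has_lcs_integral P f a b I"
    unfolding has_lcs_integral_def
  proof (intro ballI allI impI)
    fix p and e :: real assume pP: "p \<in> P" and e: "e > 0"
    have e2: "e/2 > 0" using e by simp
    obtain \<delta> where \<delta>: "\<delta> > 0" "\<forall>D1 D2. D1 tagged_division_of {a..b} \<and> (\<lambda>x. ball x \<delta>) fine D1 \<and>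
              D2 tagged_division_of {a..b} \<and> (\<lambda>x. ball x \<delta>) fine D2 \<longrightarrow> p (rsum D1 f - rsum D2 f) < e/2"
      using key[OF pP e2] by blast
    have "eventually (\<lambda>k. p (\<sigma> k - I) < e/2 \<and> 1 / real (Suc k) \<le> \<delta>) sequentially"
      using limitin_lcsD[OF sn I pP e2] eventually_small[OF \<delta>(1)] by (rule eventually_conj)
    then obtain k where k: "p (\<sigma> k - I) < e/2" "1 / real (Suc k) \<le> \<delta>"
      unfolding eventually_sequentially by blast
    show "\<exists>d>0. \<forall>D. D tagged_division_of {a..b} \<and> (\<lambda>x. ball x d) fine D \<longrightarrow> p (rsum D f - I) < e"
    proof (intro exI[of _ \<delta>] conjI allI impI)
      fix D assume D: "D tagged_division_of {a..b} \<and> (\<lambda>x. ball x \<delta>) fine D"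
      have "(\<lambda>x. ball x \<delta>) fine Dk k" using fine_ball_mono Dk(2) k(2) by blast
      then have "p (rsum D f - \<sigma> k) < e/2" using \<delta>(2) D Dk(1) unfolding \<sigma>_def by blast
      moreover have "p (rsum D f - I) \<le> p (rsum D f - \<sigma> k) + p (\<sigma> k - I)"
        by (rule sn_tri) (use sn pP in blast)
      ultimately show "p (rsum D f - I) < e" using k(1) by linarith
    qed (rule \<delta>(1))
  qed
  then show ?thesis by blast
qed


lemma rsum_bound:
  fixes a b :: real
  assumes sn: "seminorm p" and D: "D tagged_division_of {a..b}"
    and ab: "a \<le> b" and M: "\<And>s. s \<in> {a..b} \<Longrightarrow> p (f s) \<le> M"
  shows "p (rsum D f) \<le> M * (b - a)"
proof -
  let ?c = "Henstock_Kurzweil_Integration.content"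
  have "p (rsum D f) \<le> (\<Sum>i\<in>D. p (?c (snd i) *\<^sub>R f (fst i)))"
    unfolding rsum_fs by (rule sn_sum[OF sn])
  also have "\<dots> \<le> (\<Sum>i\<in>D. ?c (snd i) * M)"
  proof (rule sum_mono)
    fix i assume i: "i \<in> D"
    have "fst i \<in> {a..b}" using tagged_division_ofD(2,3)[OF D, of "fst i" "snd i"] i by auto
    then have Mx: "p (f (fst i)) \<le> M" by (rule M)
    have c0: "?c (snd i) \<ge> 0" by (rule content_pos_le)
    have "p (?c (snd i) *\<^sub>R f (fst i)) = ?c (snd i) * p (f (fst i))"
      using sn_scale[OF sn] c0 by simp
    also have "\<dots> \<le> ?c (snd i) * M" using Mx c0 by (rule mult_left_mono)
    finally show "p (?c (snd i) *\<^sub>R f (fst i)) \<le> ?c (snd i) * M" .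
  qed
  also have "\<dots> = (\<Sum>i\<in>D. ?c (snd i)) * M" by (simp add: sum_distrib_right)
  also have "(\<Sum>i\<in>D. ?c (snd i)) = b - a"
  proof -
    have "(\<Sum>(x,l)\<in>D. ?c l) = ?c (cbox a b)" by (rule additive_content_tagged_division) (use D in simp)
    then show ?thesis using ab by (simp add: split_beta)
  qed
  finally show ?thesis by (simp add: mult.commute)
qed

lemma hli_point:
  assumes sn: "\<forall>p\<in>P. seminorm p"
  shows "has_lcs_integral P f a a 0"
  unfolding has_lcs_integral_def
proof (intro ballI allI impI exI[of _ 1] conjI)
  fix p and e :: real and D assume pP: "p \<in> P" and e: "e > 0"
    and D: "D tagged_division_of {a..a} \<and> (\<lambda>x. ball x 1) fine D"
  have "p (rsum D f) \<le> p (f a) * (a - a)"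
    by (rule rsum_bound) (use sn pP D in auto)
  then show "p (rsum D f - 0) < e" using e by simp
qed simp

lemma hli_lip:
  fixes a t t' :: real
  assumes sn: "\<forall>p\<in>P. seminorm p" and pP: "p \<in> P"
    and hI: "has_lcs_integral P f a t I" and hJ: "has_lcs_integral P f a t' J"
    and at: "a \<le> t" and tt: "t \<le> t'" and M: "\<And>s. s \<in> {t..t'} \<Longrightarrow> p (f s) \<le> M"
  shows "p (J - I) \<le> M * (t' - t)"
proof (rule field_le_epsilon)
  fix e :: real assume e: "e > 0"
  have snp: "seminorm p" using sn pP by blast
  have e2: "e/2 > 0" using e by simp
  obtain d1 where d1: "d1 > 0" "\<And>D. D tagged_division_of {a..t} \<Longrightarrow> (\<lambda>x. ball x d1) fine D \<Longrightarrow> p (rsum D f - I) < e/2"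
    using hliD[OF hI pP e2] by blast
  obtain d2 where d2: "d2 > 0" "\<And>D. D tagged_division_of {a..t'} \<Longrightarrow> (\<lambda>x. ball x d2) fine D \<Longrightarrow> p (rsum D f - J) < e/2"
    using hliD[OF hJ pP e2] by blast
  define \<delta> where "\<delta> = min d1 d2"
  have \<delta>: "\<delta> > 0" using d1 d2 by (simp add: \<delta>_def)
  obtain D1 where D1: "D1 tagged_division_of {a..t}" "(\<lambda>x. ball x \<delta>) fine D1"
    using exists_fine[OF \<delta>] by blast
  obtain D2 where D2: "D2 tagged_division_of {t..t'}" "(\<lambda>x. ball x \<delta>) fine D2"
    using exists_fine[OF \<delta>] by blast
  have U: "{a..t} \<union> {t..t'} = {a..t'}" using at tt by auto
  have "(D1 \<union> D2) tagged_division_of ({a..t} \<union> {t..t'})"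
    by (rule tagged_division_Un[OF D1(1) D2(1)]) auto
  then have DU: "(D1 \<union> D2) tagged_division_of {a..t'}" unfolding U .
  have fU: "(\<lambda>x. ball x \<delta>) fine (D1 \<union> D2)" using D1(2) D2(2) by (rule fine_Un)
  have fin1: "finite D1" using D1(1) by blast
  have fin2: "finite D2" using D2(1) by blast
  have zero: "rsum (D1 \<inter> D2) f = 0"
  proof (rule sum.neutral, rule ballI)
    fix xK assume xK: "xK \<in> D1 \<inter> D2"
    obtain x K where xKe: "xK = (x, K)" by fastforce
    with xK have "(x, K) \<in> D1 \<inter> D2" by simp
    then have K: "K \<subseteq> {a..t}" "K \<subseteq> {t..t'}" "\<exists>u v. K = cbox u v"
      using tagged_division_ofD(3,4)[OF D1(1)] tagged_division_ofD(3)[OF D2(1)] by blast+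
    then obtain u v where uv: "K = cbox u v" by blast
    have "K \<subseteq> cbox t t"
    proof
      fix y assume "y \<in> K" then have "y \<le> t" "y \<ge> t" using K(1,2) by auto
      then show "y \<in> cbox t t" by simp
    qed
    then have "Henstock_Kurzweil_Integration.content K \<le> Henstock_Kurzweil_Integration.content (cbox t t)"
      unfolding uv by (rule content_subset)
    moreover have "Henstock_Kurzweil_Integration.content K \<ge> 0" by (rule content_pos_le)
    ultimately have "Henstock_Kurzweil_Integration.content K = 0" by simp
    then show "(case xK of (x, K) \<Rightarrow> Henstock_Kurzweil_Integration.content K *\<^sub>R f x) = 0" using xKe by simp
  qed
  have split: "rsum (D1 \<union> D2) f = rsum D1 f + rsum D2 f"
    using sum.union_inter[OF fin1 fin2, of "\<lambda>(x,K). Henstock_Kurzweil_Integration.content K *\<^sub>R f x"] zero by simp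
  have b2: "p (rsum D2 f) \<le> M * (t' - t)" by (rule rsum_bound[OF snp D2(1) tt M])
  have a1: "p (rsum D1 f - I) < e/2" using d1(2)[OF D1(1) fine_ball_mono[OF D1(2)]] by (simp add: \<delta>_def)
  have a2: "p (rsum (D1 \<union> D2) f - J) < e/2" using d2(2)[OF DU fine_ball_mono[OF fU]] by (simp add: \<delta>_def)
  have "J - I = (rsum D1 f - I) + rsum D2 f - (rsum (D1 \<union> D2) f - J)" unfolding split by simp
  then have "p (J - I) \<le> p ((rsum D1 f - I) + rsum D2 f) + p (rsum (D1 \<union> D2) f - J)"
    using sn_diff[OF snp] by metis
  also have "\<dots> \<le> p (rsum D1 f - I) + p (rsum D2 f) + p (rsum (D1 \<union> D2) f - J)"
    using sn_add[OF snp] by simp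
  finally show "p (J - I) \<le> M * (t' - t) + e" using a1 a2 b2 by linarith
qed

lemma cont_lcsI:
  assumes sn: "\<forall>p\<in>P. seminorm p"
    and h: "\<And>s p e. s \<in> T \<Longrightarrow> p \<in> P \<Longrightarrow> e > 0 \<Longrightarrow> \<exists>d>0. \<forall>s'\<in>T. \<bar>s' - s\<bar> < d \<longrightarrow> p (g s' - g s) < e"
  shows "continuous_map (subtopology euclideanreal T) (lcs_top P) g"
  unfolding lcs_top_def continuous_on_generated_topo_iff
proof (intro conjI allI impI)
  fix U assume U: "U \<in> insert UNIV {{y. p (y - x) < e} |p x e. p \<in> P \<and> 0 < e}"
  show "openin (top_of_set T) (g -` U \<inter> topspace (top_of_set T))"
  proof (cases "U = UNIV")
    case True then show ?thesis by simp
  next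
    case False
    then obtain p c e where U': "U = {y. p (y - c) < e}" "p \<in> P" "e > 0" using U by blast
    have snp: "seminorm p" using sn U'(2) by blast
    show ?thesis unfolding openin_euclidean_subtopology_iff
    proof (intro conjI ballI)
      show "g -` U \<inter> topspace (top_of_set T) \<subseteq> T" by simp
      fix s assume s: "s \<in> g -` U \<inter> topspace (top_of_set T)"
      then have sT: "s \<in> T" and ps: "p (g s - c) < e" using U'(1) by auto
      obtain d where d: "d > 0" "\<forall>s'\<in>T. \<bar>s' - s\<bar> < d \<longrightarrow> p (g s' - g s) < e - p (g s - c)"
        using h[OF sT U'(2), of "e - p (g s - c)"] ps by auto
      show "\<exists>d>0. \<forall>x'\<in>T. dist x' s < d \<longrightarrow> x' \<in> g -` U \<inter> topspace (top_of_set T)"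
      proof (intro exI[of _ d] conjI ballI impI)
        fix x' assume x': "x' \<in> T" "dist x' s < d"
        then have "p (g x' - g s) < e - p (g s - c)" using d(2) by (simp add: dist_real_def)
        moreover have "p (g x' - c) \<le> p (g x' - g s) + p (g s - c)" by (rule sn_tri[OF snp])
        ultimately show "x' \<in> g -` U \<inter> topspace (top_of_set T)" using x' U'(1) by simp
      qed (rule d(1))
    qed
  qed
qed simp


lemma Tint_zero: "0 < \<tau> \<Longrightarrow> 0 \<in> Tint \<tau>"
  by (simp add: Tint_def zero_ereal_def)

lemma Tint_down: "t \<in> Tint \<tau> \<Longrightarrow> 0 \<le> s \<Longrightarrow> s \<le> t \<Longrightarrow> s \<in> Tint \<tau>"
proof -
  assume a: "t \<in> Tint \<tau>" "0 \<le> s" "s \<le> t"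
  then have "ereal s \<le> ereal t" by simp
  moreover have "ereal t < \<tau>" using a(1) by (simp add: Tint_def)
  ultimately have "ereal s < \<tau>" by (rule le_less_trans)
  then show ?thesis using a(2) by (simp add: Tint_def)
qed

lemma Tint_sub: "t \<in> Tint \<tau> \<Longrightarrow> {0..t} \<subseteq> Tint \<tau>"
  using Tint_down by auto

lemma Tint_nonneg: "t \<in> Tint \<tau> \<Longrightarrow> 0 \<le> t"
  by (simp add: Tint_def)

lemma Tint_right:
  assumes "s \<in> Tint \<tau>" shows "\<exists>b\<in>Tint \<tau>. s < b"
proof (cases \<tau>)
  case (real r)
  then have "0 \<le> s" "s < r" using assms by (auto simp: Tint_def)
  then show ?thesis using real by (intro bexI[of _ "(s + r)/2"]) (auto simp: Tint_def)
next
  case PInf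
  then show ?thesis using assms by (intro bexI[of _ "s + 1"]) (auto simp: Tint_def)
next
  case MInf
  then show ?thesis using assms by (auto simp: Tint_def)
qed

lemma sn_bound:
  assumes sn: "\<forall>p\<in>P. seminorm p"
    and c: "continuous_map (subtopology euclideanreal T) (lcs_top P) f"
    and sub: "{a..b} \<subseteq> T" and pP: "p \<in> P"
  shows "\<exists>M\<ge>0. \<forall>r\<in>{a..b}. p (f r) \<le> M"
proof -
  have snp: "seminorm p" using sn pP by blast
  have "continuous_on {a..b} (\<lambda>r. p (f r))"
    unfolding continuous_on_iff
  proof (intro ballI allI impI)
    fix x and e :: real assume x: "x \<in> {a..b}" and e: "e > 0"
    obtain d where d: "d > 0" "\<forall>s'\<in>T. \<bar>s' - x\<bar> < d \<longrightarrow> p (f s' - f x) < e"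
      using cont_sn[OF sn c _ pP e, of x] x sub by blast
    show "\<exists>d>0. \<forall>x'\<in>{a..b}. dist x' x < d \<longrightarrow> dist (p (f x')) (p (f x)) < e"
    proof (intro exI[of _ d] conjI ballI impI)
      fix x' assume x': "x' \<in> {a..b}" "dist x' x < d"
      then have lt: "p (f x' - f x) < e" using d(2) sub by (auto simp: dist_real_def)
      have "p (f x') \<le> p (f x' - f x) + p (f x - 0)" using sn_tri[OF snp, of "f x'" 0 "f x"] by simp
      moreover have "p (f x) \<le> p (f x - f x') + p (f x' - 0)" using sn_tri[OF snp, of "f x" 0 "f x'"] by simp
      moreover have "p (f x - f x') = p (f x' - f x)" by (rule sn_commute[OF snp])
      ultimately show "dist (p (f x')) (p (f x)) < e" using lt by (simp add: dist_real_def)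
    qed (rule d(1))
  qed
  then have "compact ((\<lambda>r. p (f r)) ` {a..b})" by (rule compact_continuous_image[OF _ compact_Icc])
  then obtain B where B: "\<forall>y\<in>(\<lambda>r. p (f r)) ` {a..b}. norm y \<le> B"
    using compact_imp_bounded bounded_iff by metis
  show ?thesis
  proof (intro exI[of _ "max B 0"] conjI ballI)
    fix r assume "r \<in> {a..b}"
    then have "norm (p (f r)) \<le> B" using B by blast
    then show "p (f r) \<le> max B 0" by simp
  qed simp
qed

lemma intfun_cont:
  assumes sc: "sc_lcs P"
    and c: "continuous_map (subtopology euclideanreal (Tint \<tau>)) (lcs_top P) f"
    and F: "\<And>t. t \<in> Tint \<tau> \<Longrightarrow> has_lcs_integral P f 0 t (F t)"
  shows "continuous_map (subtopology euclideanreal (Tint \<tau>)) (lcs_top P) F"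
proof -
  have sn: "\<forall>p\<in>P. seminorm p" using sc sc_lcs_def by blast
  show ?thesis
  proof (rule cont_lcsI[OF sn])
    fix s p and e :: real assume s: "s \<in> Tint \<tau>" and pP: "p \<in> P" and e: "e > 0"
    have snp: "seminorm p" using sn pP by blast
    obtain b where b: "b \<in> Tint \<tau>" "s < b" using Tint_right[OF s] by blast
    obtain M where M: "M \<ge> 0" "\<forall>r\<in>{0..b}. p (f r) \<le> M"
      using sn_bound[OF sn c Tint_sub[OF b(1)] pP] by blast
    have s0: "0 \<le> s" using s by (rule Tint_nonneg)
    define d where "d = min (b - s) (e / (M + 1))"
    have d0: "d > 0" using b M e by (simp add: d_def)
    show "\<exists>d>0. \<forall>s'\<in>Tint \<tau>. \<bar>s' - s\<bar> < d \<longrightarrow> p (F s' - F s) < e"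
    proof (intro exI[of _ d] conjI ballI impI)
      fix s' assume s': "s' \<in> Tint \<tau>" "\<bar>s' - s\<bar> < d"
      have s'0: "0 \<le> s'" using s'(1) by (rule Tint_nonneg)
      have s'b: "s' \<le> b" using s'(2) by (simp add: d_def abs_less_iff)
      have le: "p (F s' - F s) \<le> M * \<bar>s' - s\<bar>"
      proof (cases "s \<le> s'")
        case True
        have "p (F s' - F s) \<le> M * (s' - s)"
          by (rule hli_lip[OF sn pP F[OF s] F[OF s'(1)] s0 True]) (use M s0 s'b in auto)
        then show ?thesis using True by simp
      next
        case False
        have "p (F s - F s') \<le> M * (s - s')"
          by (rule hli_lip[OF sn pP F[OF s'(1)] F[OF s] s'0]) (use M s0 s'0 s'b b False in auto)
        then show ?thesis using False sn_commute[OF snp, of "F s" "F s'"] by simp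
      qed
      also have "\<dots> \<le> M * (e / (M + 1))"
        using s'(2) M(1) by (intro mult_left_mono) (auto simp: d_def)
      also have "\<dots> < e"
      proof -
        have "M * (e / (M + 1)) = e * (M / (M + 1))" by simp
        also have "\<dots> < e * 1" using e M(1) by (intro mult_strict_left_mono) auto
        finally show ?thesis by simp
      qed
      finally show "p (F s' - F s) < e" .
    qed (rule d0)
  qed
qed

section \<open>Closed operators and integrals\<close>

lemma clo_D:
  assumes "closed_linear_op P D A"
  shows "subspace D" "\<And>x y. x \<in> D \<Longrightarrow> y \<in> D \<Longrightarrow> A (x + y) = A x + A y"
    "\<And>c x. x \<in> D \<Longrightarrow> A (c *\<^sub>R x) = c *\<^sub>R A x"
    "closedin (prod_topology (lcs_top P) (lcs_top P)) {(x, A x) | x. x \<in> D}"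
  using assms unfolding closed_linear_op_def by blast+

lemma clo_zero: "closed_linear_op P D A \<Longrightarrow> A 0 = 0 \<and> 0 \<in> D"
  using clo_D(3)[of P D A 0 0] clo_D(1)[of P D A] subspace_0 by force

lemma clo_diff:
  assumes "closed_linear_op P D A" "x \<in> D" "y \<in> D"
  shows "A (x - y) = A x - A y"
proof -
  have "-y \<in> D" using clo_D(1)[OF assms(1)] assms(3) subspace_neg by blast
  moreover have "A (-y) = - A y" using clo_D(3)[OF assms(1) assms(3), of "-1"] by simp
  ultimately show ?thesis using clo_D(2)[OF assms(1) assms(2), of "-y"] by simp
qed

lemma A_sum:
  assumes cl: "closed_linear_op P D A" and v: "\<And>i. i \<in> S \<Longrightarrow> v i \<in> D"
  shows "(\<Sum>i\<in>S. c i *\<^sub>R v i) \<in> D \<and> A (\<Sum>i\<in>S. c i *\<^sub>R v i) = (\<Sum>i\<in>S. c i *\<^sub>R A (v i))"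
  using v
proof (induction S rule: infinite_finite_induct)
  case (infinite A) then show ?case using clo_zero[OF cl] by simp
next
  case empty then show ?case using clo_zero[OF cl] by simp
next
  case (insert x F)
  have sub: "subspace D" by (rule clo_D(1)[OF cl])
  have IH: "(\<Sum>i\<in>F. c i *\<^sub>R v i) \<in> D \<and> A (\<Sum>i\<in>F. c i *\<^sub>R v i) = (\<Sum>i\<in>F. c i *\<^sub>R A (v i))"
    using insert by blast
  have vx: "v x \<in> D" using insert by blast
  have cx: "c x *\<^sub>R v x \<in> D" using sub vx subspace_scale by blast
  show ?case
    using insert(1,2) IH cx clo_D(2)[OF cl cx, of "\<Sum>i\<in>F. c i *\<^sub>R v i"] clo_D(3)[OF cl vx, of "c x"]
      subspace_add[OF sub cx, of "\<Sum>i\<in>F. c i *\<^sub>R v i"] by simp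
qed

lemma hli_limit:
  assumes sn: "\<forall>p\<in>P. seminorm p" and h: "has_lcs_integral P f a b I"
    and Dk: "\<And>k. Dk k tagged_division_of {a..b}" "\<And>k. (\<lambda>x. ball x (1 / Suc k)) fine Dk k"
  shows "limitin (lcs_top P) (\<lambda>k. rsum (Dk k) f) I sequentially"
proof (rule limitin_lcsI[OF sn])
  fix p and e :: real assume pP: "p \<in> P" and e: "e > 0"
  obtain d where d: "d > 0" "\<And>D. D tagged_division_of {a..b} \<Longrightarrow> (\<lambda>x. ball x d) fine D \<Longrightarrow> p (rsum D f - I) < e"
    using hliD[OF h pP e] by blast
  show "eventually (\<lambda>k. p (rsum (Dk k) f - I) < e) sequentially"
    using eventually_small[OF d(1)]
  proof (rule eventually_mono)
    fix k assume "1 / real (Suc k) \<le> d"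
    then have "(\<lambda>x. ball x d) fine Dk k" using fine_ball_mono Dk(2) by blast
    then show "p (rsum (Dk k) f - I) < e" using d(2) Dk(1) by blast
  qed
qed

lemma hli_closed:
  assumes sc: "sc_lcs P" and cl: "closed_linear_op P D A"
    and fD: "\<And>s. s \<in> {a..b} \<Longrightarrow> f s \<in> D"
    and hI: "has_lcs_integral P f a b I" and hJ: "has_lcs_integral P (\<lambda>s. A (f s)) a b J"
  shows "I \<in> D \<and> A I = J"
proof -
  have sn: "\<forall>p\<in>P. seminorm p" using sc sc_lcs_def by blast
  obtain Dk where Dk: "\<And>k. Dk k tagged_division_of {a..b}" "\<And>k. (\<lambda>x. ball x (1 / Suc k)) fine Dk k"
    using div_seq by blast
  have mem: "rsum (Dk k) f \<in> D \<and> A (rsum (Dk k) f) = rsum (Dk k) (\<lambda>s. A (f s))" for k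
  proof -
    have "f (fst i) \<in> D" if i: "i \<in> Dk k" for i
    proof -
      have "fst i \<in> snd i" "snd i \<subseteq> {a..b}" using tagged_division_ofD(2,3)[OF Dk(1), of "fst i" "snd i" k] i by auto
      then show ?thesis by (intro fD) blast
    qed
    then show ?thesis unfolding rsum_fs by (rule A_sum[OF cl])
  qed
  have l1: "limitin (lcs_top P) (\<lambda>k. rsum (Dk k) f) I sequentially" by (rule hli_limit[OF sn hI Dk])
  have l2: "limitin (lcs_top P) (\<lambda>k. rsum (Dk k) (\<lambda>s. A (f s))) J sequentially" by (rule hli_limit[OF sn hJ Dk])
  have e: "(\<lambda>k. A (rsum (Dk k) f)) = (\<lambda>k. rsum (Dk k) (\<lambda>s. A (f s)))" using mem by (intro ext) blast
  have L: "limitin (prod_topology (lcs_top P) (lcs_top P)) (\<lambda>k. (rsum (Dk k) f, A (rsum (Dk k) f))) (I, J) sequentially"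
    unfolding limitin_pairwise o_def fst_conv snd_conv e using l1 l2 by (rule conjI)
  have Ev: "eventually (\<lambda>k. (rsum (Dk k) f, A (rsum (Dk k) f)) \<in> {(x, A x) | x. x \<in> D}) sequentially"
    using mem by (intro always_eventually allI) blast
  have "(I, J) \<in> {(x, A x) | x. x \<in> D}"
    by (rule limitin_closedin[OF L clo_D(4)[OF cl] Ev]) simp
  then show ?thesis by blast
qed


lemma hli_poly:
  assumes sc: "sc_lcs P" and t: "0 \<le> t"
  shows "has_lcs_integral P (\<lambda>s. (s ^ j / fact j) *\<^sub>R x) 0 t ((t ^ Suc j / fact (Suc j)) *\<^sub>R x)"
proof -
  have sn: "\<forall>p\<in>P. seminorm p" using sc sc_lcs_def by blast
  define g :: "real \<Rightarrow> real" where "g s = s ^ j / fact j" for s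
  define G :: "real \<Rightarrow> real" where "G s = s ^ Suc j / fact (Suc j)" for s
  have gc: "continuous_on UNIV g" unfolding g_def by (intro continuous_intros) auto
  have cont: "continuous_map (subtopology euclideanreal UNIV) (lcs_top P) (\<lambda>s. g s *\<^sub>R x)"
  proof (rule cont_lcsI[OF sn])
    fix s p and e :: real assume pP: "p \<in> P" and e: "e > 0"
    have snp: "seminorm p" using sn pP by blast
    have px: "p x \<ge> 0" by (rule sn_nonneg[OF snp])
    have e': "e / (p x + 1) > 0" using e px by simp
    obtain d where d: "d > 0" "\<forall>s'\<in>UNIV. dist s' s < d \<longrightarrow> dist (g s') (g s) < e / (p x + 1)"
      using gc e' unfolding continuous_on_iff by blast
    show "\<exists>d>0. \<forall>s'\<in>UNIV. \<bar>s' - s\<bar> < d \<longrightarrow> p (g s' *\<^sub>R x - g s *\<^sub>R x) < e"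
    proof (intro exI[of _ d] conjI ballI impI)
      fix s' assume "\<bar>s' - s\<bar> < d"
      then have lt: "\<bar>g s' - g s\<bar> < e / (p x + 1)" using d(2) by (simp add: dist_real_def)
      have "p (g s' *\<^sub>R x - g s *\<^sub>R x) = \<bar>g s' - g s\<bar> * p x"
        using sn_scale[OF snp, of "g s' - g s" x] by (simp add: scaleR_diff_left)
      also have "\<dots> \<le> e / (p x + 1) * p x" using lt px by (intro mult_right_mono) auto
      also have "\<dots> < e"
      proof -
        have "e / (p x + 1) * p x = e * (p x / (p x + 1))" by simp
        also have "\<dots> < e * 1" using e px by (intro mult_strict_left_mono) auto
        finally show ?thesis by simp
      qed
      finally show "p (g s' *\<^sub>R x - g s *\<^sub>R x) < e" .
    qed (rule d(1))
  qed
  obtain I where I: "has_lcs_integral P (\<lambda>s. g s *\<^sub>R x) 0 t I"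
    using hli_exists[OF sc cont _ t] by blast
  have deriv: "(G has_vector_derivative g s) (at s within {0..t})" for s
  proof -
    have "(G has_real_derivative (real (Suc j) * s ^ j / fact (Suc j))) (at s within {0..t})"
      unfolding G_def using DERIV_cdivide[OF DERIV_pow[of "Suc j" s "{0..t}"], of "fact (Suc j)"] by simp
    moreover have "real (Suc j) * s ^ j / fact (Suc j) = g s"
      unfolding g_def by (simp add: fact_Suc divide_simps del: of_nat_Suc)
    ultimately show ?thesis by (simp add: has_real_derivative_iff_has_vector_derivative)
  qed
  have HK: "(g has_integral (G t - G 0)) {0..t}"
    by (rule fundamental_theorem_of_calculus[OF t]) (rule deriv)
  have G0: "G 0 = 0" by (simp add: G_def)
  have "I = G t *\<^sub>R x"
  proof (rule sc_lcs_eq[OF sc])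
    fix p and e :: real assume pP: "p \<in> P" and e: "e > 0"
    have snp: "seminorm p" using sn pP by blast
    have px: "p x \<ge> 0" by (rule sn_nonneg[OF snp])
    define e' where "e' = e / (2 * (p x + 1))"
    have e': "e' > 0" using e px by (simp add: e'_def)
    obtain d where d: "d > 0" "\<And>D. D tagged_division_of {0..t} \<Longrightarrow> (\<lambda>x. ball x d) fine D \<Longrightarrow> p (rsum D (\<lambda>s. g s *\<^sub>R x) - I) < e'"
      using hliD[OF I pP e'] by blast
    obtain \<gamma> where \<gamma>: "gauge \<gamma>" "\<And>D. D tagged_division_of {0..t} \<Longrightarrow> \<gamma> fine D \<Longrightarrow>
        norm ((\<Sum>(x,k)\<in>D. Henstock_Kurzweil_Integration.content k *\<^sub>R g x) - (G t - G 0)) < e'"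
      using HK e' unfolding has_integral_real by meson
    obtain D where D: "D tagged_division_of {0..t}" "(\<lambda>y. ball y d \<inter> \<gamma> y) fine D"
      using fine_division_exists_real[of "\<lambda>y. ball y d \<inter> \<gamma> y" 0 t] gauge_Int[OF gauge_ball[OF d(1)] \<gamma>(1)] by blast
    have ff: "(\<lambda>y. ball y d) fine D \<and> \<gamma> fine D" using D(2) fine_Int[of "\<lambda>y. ball y d" \<gamma> D] by simp
    have f1: "(\<lambda>y. ball y d) fine D" and f2: "\<gamma> fine D" using ff by auto
    define \<Sigma> where "\<Sigma> = (\<Sum>(x,k)\<in>D. Henstock_Kurzweil_Integration.content k *\<^sub>R g x)"
    have a1: "p (rsum D (\<lambda>s. g s *\<^sub>R x) - I) < e'" by (rule d(2)[OF D(1) f1])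
    have a2: "\<bar>\<Sigma> - G t\<bar> < e'" using \<gamma>(2)[OF D(1) f2] G0 by (simp add: \<Sigma>_def)
    have rs: "rsum D (\<lambda>s. g s *\<^sub>R x) = \<Sigma> *\<^sub>R x"
      unfolding rsum_fs \<Sigma>_def split_beta scaleR_sum_left by simp
    have "p (I - G t *\<^sub>R x) \<le> p (I - rsum D (\<lambda>s. g s *\<^sub>R x)) + p (rsum D (\<lambda>s. g s *\<^sub>R x) - G t *\<^sub>R x)"
      by (rule sn_tri[OF snp])
    also have "p (I - rsum D (\<lambda>s. g s *\<^sub>R x)) = p (rsum D (\<lambda>s. g s *\<^sub>R x) - I)" by (rule sn_commute[OF snp])
    also have "p (rsum D (\<lambda>s. g s *\<^sub>R x) - G t *\<^sub>R x) = \<bar>\<Sigma> - G t\<bar> * p x"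
      unfolding rs using sn_scale[OF snp, of "\<Sigma> - G t" x] by (simp add: scaleR_diff_left)
    also have "\<bar>\<Sigma> - G t\<bar> * p x \<le> e' * p x" using a2 px by (intro mult_right_mono) auto
    finally have "p (I - G t *\<^sub>R x) < e' + e' * p x" using a1 by linarith
    also have "e' + e' * p x = e / 2"
    proof -
      have "e' + e' * p x = e' * (p x + 1)" by (simp add: algebra_simps)
      also have "\<dots> = e / 2"
      proof -
        have "p x + 1 \<noteq> 0" using px by simp
        then show ?thesis unfolding e'_def by (simp add: field_simps)
      qed
      finally show ?thesis .
    qed
    finally show "p (I - G t *\<^sub>R x) < e" using e by linarith
  qed
  then show ?thesis using I unfolding g_def G_def by simp
qed

lemma dp_Suc_sub: "dom_pow D A (Suc m) \<subseteq> dom_pow D A m"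
proof (induction m)
  case 0 then show ?case by simp
next
  case (Suc m) then show ?case by auto
qed

lemma dp_mono: "k \<le> m \<Longrightarrow> dom_pow D A m \<subseteq> dom_pow D A k"
proof (induction m)
  case 0 then show ?case by simp
next
  case (Suc m)
  then show ?case
    using dp_Suc_sub[of D A m] by (cases "k = Suc m") auto
qed

lemma dp_sub:
  assumes cl: "closed_linear_op P D A"
  shows "(x \<in> dom_pow D A m \<longrightarrow> y \<in> dom_pow D A m \<longrightarrow> x + y \<in> dom_pow D A m) \<and>
         (x \<in> dom_pow D A m \<longrightarrow> c *\<^sub>R x \<in> dom_pow D A m)"
proof (induction m arbitrary: x y c)
  case 0 then show ?case by simp
next
  case (Suc m)
  have sub: "subspace D" by (rule clo_D(1)[OF cl])
  show ?case
  proof (intro conjI impI)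
    assume x: "x \<in> dom_pow D A (Suc m)" and y: "y \<in> dom_pow D A (Suc m)"
    then have "x \<in> D" "y \<in> D" "A x \<in> dom_pow D A m" "A y \<in> dom_pow D A m" by auto
    then show "x + y \<in> dom_pow D A (Suc m)"
      using Suc.IH clo_D(2)[OF cl] subspace_add[OF sub] by simp
  next
    assume x: "x \<in> dom_pow D A (Suc m)"
    then have "x \<in> D" "A x \<in> dom_pow D A m" by auto
    then show "c *\<^sub>R x \<in> dom_pow D A (Suc m)"
      using Suc.IH clo_D(3)[OF cl] subspace_scale[OF sub] by simp
  qed
qed

lemma dp_add: "closed_linear_op P D A \<Longrightarrow> x \<in> dom_pow D A m \<Longrightarrow> y \<in> dom_pow D A m \<Longrightarrow> x + y \<in> dom_pow D A m"
  using dp_sub by blast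

lemma dp_scale: "closed_linear_op P D A \<Longrightarrow> x \<in> dom_pow D A m \<Longrightarrow> c *\<^sub>R x \<in> dom_pow D A m"
  using dp_sub by blast

lemma dp_diff: "closed_linear_op P D A \<Longrightarrow> x \<in> dom_pow D A m \<Longrightarrow> y \<in> dom_pow D A m \<Longrightarrow> x - y \<in> dom_pow D A m"
  using dp_add[of P D A x m "(-1) *\<^sub>R y"] dp_scale[of P D A y m "-1"] by simp

lemma dp_SucI: "x \<in> D \<Longrightarrow> A x \<in> dom_pow D A m \<Longrightarrow> x \<in> dom_pow D A (Suc m)"
  by simp

lemma closure_from_limit:
  assumes l: "limitin (lcs_top P) y x (at_right (0::real))"
    and ev: "eventually (\<lambda>t. y t \<in> S) (at_right 0)"
  shows "x \<in> (lcs_top P) closure_of S"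
  unfolding in_closure_of
proof (intro conjI allI impI)
  show "x \<in> topspace (lcs_top P)" by simp
  fix T assume T: "x \<in> T \<and> openin (lcs_top P) T"
  then have "eventually (\<lambda>t. y t \<in> T) (at_right 0)" using l unfolding limitin_def by blast
  then have "eventually (\<lambda>t. y t \<in> S \<and> y t \<in> T) (at_right 0)" using ev by (intro eventually_conj) auto
  then obtain t where "y t \<in> S" "y t \<in> T"
    using eventually_happens'[OF trivial_limit_at_right_real] by blast
  then show "\<exists>y. y \<in> S \<and> y \<in> T" by blast
qed

lemma conclude:
  assumes "\<And>m. m \<ge> n \<Longrightarrow> dom_pow D A m \<subseteq> (lcs_top P) closure_of (dom_pow D A (Suc m))"
  shows "stationary_dense P D A \<and> n_index P D A \<le> n"
proof -
  have n: "n \<in> sd_indices P D A" unfolding sd_indices_def using assms by blast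
  then have "Inf (sd_indices P D A) \<le> n" by (rule cInf_lower) (simp add: bdd_below_def)
  then show ?thesis using n unfolding stationary_dense_def n_index_def by blast
qed

lemma limit_lemma:
  assumes sn: "\<forall>p\<in>P. seminorm p"
    and t0: "t0 \<in> Tint \<tau>" "t0 > 0"
    and h: "\<And>p \<epsilon>. p \<in> P \<Longrightarrow> \<epsilon> > 0 \<Longrightarrow> \<exists>\<delta>>0. \<forall>t\<in>Tint \<tau>. 0 < t \<and> t < \<delta> \<longrightarrow>
        p (K t - (t ^ N / fact N) *\<^sub>R x) \<le> \<epsilon> * t ^ N"
  shows "limitin (lcs_top P) (\<lambda>t. (fact N / t ^ N) *\<^sub>R K t) x (at_right 0)"
proof (rule limitin_lcsI[OF sn])
  fix p and e :: real assume pP: "p \<in> P" and e: "e > 0"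
  have snp: "seminorm p" using sn pP by blast
  define \<epsilon> where "\<epsilon> = e / (2 * fact N)"
  have \<epsilon>: "\<epsilon> > 0" using e by (simp add: \<epsilon>_def)
  obtain \<delta> where \<delta>: "\<delta> > 0" "\<forall>t\<in>Tint \<tau>. 0 < t \<and> t < \<delta> \<longrightarrow> p (K t - (t ^ N / fact N) *\<^sub>R x) \<le> \<epsilon> * t ^ N"
    using h[OF pP \<epsilon>] by blast
  have "eventually (\<lambda>t. t \<in> {0<..<min \<delta> t0}) (at_right (0::real))"
    by (rule eventually_at_right_real) (use \<delta> t0 in simp)
  then show "eventually (\<lambda>t. p ((fact N / t ^ N) *\<^sub>R K t - x) < e) (at_right 0)"
  proof (rule eventually_mono)
    fix t :: real assume t: "t \<in> {0<..<min \<delta> t0}"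
    then have tT: "t \<in> Tint \<tau>" using Tint_down[OF t0(1), of t] by auto
    have tp: "t ^ N > 0" using t by simp
    have b: "p (K t - (t ^ N / fact N) *\<^sub>R x) \<le> \<epsilon> * t ^ N" using \<delta>(2) tT t by auto
    have eq: "(fact N / t ^ N) *\<^sub>R K t - x = (fact N / t ^ N) *\<^sub>R (K t - (t ^ N / fact N) *\<^sub>R x)"
      using tp t by (simp add: scaleR_diff_right)
    have "p ((fact N / t ^ N) *\<^sub>R K t - x) = (fact N / t ^ N) * p (K t - (t ^ N / fact N) *\<^sub>R x)"
      unfolding eq using sn_scale[OF snp] tp by simp
    also have "\<dots> \<le> (fact N / t ^ N) * (\<epsilon> * t ^ N)" using b tp by (intro mult_left_mono) auto
    also have "\<dots> = e / 2" using tp t by (simp add: \<epsilon>_def)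
    finally show "p ((fact N / t ^ N) *\<^sub>R K t - x) < e" using e by linarith
  qed
qed


section \<open>Part (ii)\<close>

lemma part2:
  assumes sc: "sc_lcs P" and cl: "closed_linear_op P D A" and tau: "0 < \<tau>"
    and S: "loc_equicont_int_semigroup P D A \<tau> n S"
  shows "stationary_dense P D A \<and> n_index P D A \<le> n"
proof -
  have sn: "\<forall>p\<in>P. seminorm p" using sc sc_lcs_def by blast
  note Sd = S[unfolded loc_equicont_int_semigroup_def]
  have L2: "\<And>x. continuous_map (subtopology euclideanreal (Tint \<tau>)) (lcs_top P) (\<lambda>t. S t x)"
    using Sd[THEN conjunct2, THEN conjunct1] by blast
  have L4: "\<And>t x. t \<in> Tint \<tau> \<Longrightarrow> x \<in> D \<Longrightarrow> S t x \<in> D \<and> A (S t x) = S t (A x)"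
    using Sd[THEN conjunct2, THEN conjunct2, THEN conjunct2, THEN conjunct1] by blast
  have L5: "\<And>t x. t \<in> Tint \<tau> \<Longrightarrow> \<exists>I. has_lcs_integral P (\<lambda>s. S s x) 0 t I \<and> I \<in> D
          \<and> A I = S t x - (t ^ n / fact n) *\<^sub>R x"
    using Sd[THEN conjunct2, THEN conjunct2, THEN conjunct2, THEN conjunct2, THEN conjunct1] by blast
  have T0: "0 \<in> Tint \<tau>" by (rule Tint_zero[OF tau])
  obtain t0 where t0: "t0 \<in> Tint \<tau>" "0 < t0" using Tint_right[OF T0] by blast
  have S0: "S 0 x = (0 ^ n / fact n) *\<^sub>R x" for x
  proof -
    obtain I where I: "has_lcs_integral P (\<lambda>s. S s x) 0 0 I" "I \<in> D" "A I = S 0 x - (0 ^ n / fact n) *\<^sub>R x"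
      using L5[OF T0, of x] by auto
    have "I = 0" using hli_unique[OF sc I(1) hli_point[OF sn]] .
    then show ?thesis using I(3) clo_zero[OF cl] by simp
  qed
  have Idn: "S t z - (t ^ n / fact n) *\<^sub>R z = J"
    if z: "z \<in> D" and t: "t \<in> Tint \<tau>" and J: "has_lcs_integral P (\<lambda>s. S s (A z)) 0 t J" for z t J
  proof -
    obtain I where I: "has_lcs_integral P (\<lambda>s. S s z) 0 t I" "I \<in> D" "A I = S t z - (t ^ n / fact n) *\<^sub>R z"
      using L5[OF t, of z] by auto
    have sT: "s \<in> Tint \<tau>" if "s \<in> {0..t}" for s using Tint_sub[OF t] that by blast
    have J': "has_lcs_integral P (\<lambda>s. A (S s z)) 0 t J"
      by (rule hli_cong[OF J]) (use L4[OF sT z] in simp)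
    have "I \<in> D \<and> A I = J" by (rule hli_closed[OF sc cl _ I(1) J']) (use L4[OF sT z] in simp)
    then show ?thesis using I(3) by simp
  qed
  have Jex: "\<exists>J. has_lcs_integral P (\<lambda>s. S s y) 0 t J" if "t \<in> Tint \<tau>" for y t
    using L5[OF that, of y] by blast
  have bnd: "p J \<le> \<epsilon> * t ^ k * t"
    if J: "has_lcs_integral P (\<lambda>s. S s y) 0 t J" and pP: "p \<in> P" and t: "t \<in> Tint \<tau>" and td: "t < \<delta>"
       and h: "\<forall>s\<in>Tint \<tau>. s < \<delta> \<longrightarrow> p (S s y) \<le> \<epsilon> * s ^ k" and ep: "\<epsilon> \<ge> 0" for J p t \<delta> y \<epsilon> k
  proof -
    have "p J \<le> (\<epsilon> * t ^ k) * (t - 0)"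
    proof (rule hli_bound[OF _ pP J])
      show "seminorm p" using sn pP by blast
      show "0 \<le> t" using t by (rule Tint_nonneg)
      fix s assume s: "s \<in> {0..t}"
      then have "s \<in> Tint \<tau>" "s < \<delta>" using Tint_sub[OF t] td by auto
      then have "p (S s y) \<le> \<epsilon> * s ^ k" using h by blast
      also have "\<dots> \<le> \<epsilon> * t ^ k" using s ep by (intro mult_left_mono power_mono) auto
      finally show "p (S s y) \<le> \<epsilon> * t ^ k" .
    qed
    then show ?thesis by simp
  qed
  have SL: "k < n \<longrightarrow> (\<forall>z\<in>dom_pow D A k. \<forall>p\<in>P. \<forall>\<epsilon>>0. \<exists>\<delta>>0. \<forall>s\<in>Tint \<tau>. s < \<delta> \<longrightarrow> p (S s z) \<le> \<epsilon> * s ^ k)" for k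
  proof (induction k)
    case 0
    show ?case
    proof (intro impI ballI allI)
      fix z p and \<epsilon> :: real assume n: "0 < n" and pP: "p \<in> P" and e: "\<epsilon> > 0"
      have "S 0 z = 0" using S0[of z] n by simp
      then obtain d where d: "d > 0" "\<forall>s'\<in>Tint \<tau>. \<bar>s' - 0\<bar> < d \<longrightarrow> p (S s' z - 0) < \<epsilon>"
        using cont_sn[OF sn L2 T0 pP e, of z] by auto
      show "\<exists>\<delta>>0. \<forall>s\<in>Tint \<tau>. s < \<delta> \<longrightarrow> p (S s z) \<le> \<epsilon> * s ^ 0"
      proof (intro exI[of _ d] conjI ballI impI)
        fix s assume s: "s \<in> Tint \<tau>" "s < d"
        then have "\<bar>s - 0\<bar> < d" using Tint_nonneg[OF s(1)] by simp
        then show "p (S s z) \<le> \<epsilon> * s ^ 0" using d(2) s(1) by fastforce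
      qed (rule d(1))
    qed
  next
    case (Suc k)
    show ?case
    proof (intro impI ballI allI)
      fix z p and \<epsilon> :: real assume kn: "Suc k < n" and z: "z \<in> dom_pow D A (Suc k)" and pP: "p \<in> P" and e: "\<epsilon> > 0"
      have snp: "seminorm p" using sn pP by blast
      have zD: "z \<in> D" and Az: "A z \<in> dom_pow D A k" using z by auto
      have e2: "\<epsilon>/2 > 0" using e by simp
      obtain \<delta>1 where \<delta>1: "\<delta>1 > 0" "\<forall>s\<in>Tint \<tau>. s < \<delta>1 \<longrightarrow> p (S s (A z)) \<le> \<epsilon>/2 * s ^ k"
        using Suc.IH kn Az pP e2 by (meson Suc_lessD)
      have pz: "p z \<ge> 0" by (rule sn_nonneg[OF snp])
      define \<delta> where "\<delta> = min \<delta>1 (min 1 (\<epsilon> / (2 * (p z + 1))))"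
      have \<delta>0: "\<delta> > 0" using \<delta>1 e pz by (simp add: \<delta>_def)
      show "\<exists>\<delta>>0. \<forall>s\<in>Tint \<tau>. s < \<delta> \<longrightarrow> p (S s z) \<le> \<epsilon> * s ^ Suc k"
      proof (intro exI[of _ \<delta>] conjI ballI impI)
        fix s assume s: "s \<in> Tint \<tau>" "s < \<delta>"
        have s0: "0 \<le> s" using s(1) by (rule Tint_nonneg)
        have s1: "s \<le> 1" using s(2) by (simp add: \<delta>_def)
        have sd1: "s < \<delta>1" using s(2) by (simp add: \<delta>_def)
        have sz: "s * (p z + 1) < \<epsilon> / 2"
        proof -
          have "s < \<epsilon> / (2 * (p z + 1))" using s(2) by (simp add: \<delta>_def)
          then have "s * (p z + 1) < \<epsilon> / (2 * (p z + 1)) * (p z + 1)"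
            using pz by (intro mult_strict_right_mono) auto
          also have "\<dots> = \<epsilon> / 2"
          proof -
            have "p z + 1 \<noteq> 0" using pz by simp
            then show ?thesis by (simp add: field_simps)
          qed
          finally show ?thesis .
        qed
        obtain J where J: "has_lcs_integral P (\<lambda>r. S r (A z)) 0 s J" using Jex[OF s(1)] by blast
        have Jb: "p J \<le> \<epsilon>/2 * s ^ k * s"
          by (rule bnd[OF J pP s(1) sd1]) (use \<delta>1 e in auto)
        have eqJ: "S s z = J + (s ^ n / fact n) *\<^sub>R z" using Idn[OF zD s(1) J] by (simp add: algebra_simps)
        have "p (S s z) \<le> p J + p ((s ^ n / fact n) *\<^sub>R z)" unfolding eqJ by (rule sn_add[OF snp])
        also have "p ((s ^ n / fact n) *\<^sub>R z) = (s ^ n / fact n) * p z" using sn_scale[OF snp] s0 by simp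
        also have "(s ^ n / fact n) * p z \<le> s ^ Suc k * (\<epsilon>/2)"
        proof -
          have "s ^ n / fact n \<le> s ^ n" using s0 by (simp add: divide_le_eq fact_ge_1 mult_le_cancel_left1 order.trans[OF _ fact_ge_1])
          also have "\<dots> \<le> s ^ Suc (Suc k)" using s0 s1 kn by (intro power_decreasing) auto
          finally have "(s ^ n / fact n) * p z \<le> s ^ Suc (Suc k) * p z" using pz by (intro mult_right_mono)
          also have "\<dots> = s ^ Suc k * (s * p z)" by simp
          also have "\<dots> \<le> s ^ Suc k * (\<epsilon>/2)"
          proof (intro mult_left_mono)
            show "s * p z \<le> \<epsilon>/2" using sz s0 by (simp add: algebra_simps)
          qed (use s0 in simp)
          finally show ?thesis .
        qed
        finally show "p (S s z) \<le> \<epsilon> * s ^ Suc k" using Jb by (simp add: algebra_simps)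
      qed (rule \<delta>0)
    qed
  qed
  have E: "\<exists>\<delta>>0. \<forall>s\<in>Tint \<tau>. s < \<delta> \<longrightarrow> p (S s x - (s ^ n / fact n) *\<^sub>R x) \<le> \<epsilon> * s ^ n"
    if x: "x \<in> dom_pow D A n" and pP: "p \<in> P" and e: "\<epsilon> > 0" for x p \<epsilon>
  proof (cases n)
    case 0
    have "S 0 x = x" using S0[of x] 0 by simp
    then obtain d where d: "d > 0" "\<forall>s'\<in>Tint \<tau>. \<bar>s' - 0\<bar> < d \<longrightarrow> p (S s' x - x) < \<epsilon>"
      using cont_sn[OF sn L2 T0 pP e, of x] by auto
    show ?thesis
    proof (intro exI[of _ d] conjI ballI impI)
      fix s assume s: "s \<in> Tint \<tau>" "s < d"
      then have "\<bar>s - 0\<bar> < d" using Tint_nonneg[OF s(1)] by simp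
      then have "p (S s x - x) < \<epsilon>" using d(2) s(1) by blast
      then show "p (S s x - (s ^ n / fact n) *\<^sub>R x) \<le> \<epsilon> * s ^ n" using 0 by simp
    qed (rule d(1))
  next
    case (Suc n')
    have xD: "x \<in> D" and Ax: "A x \<in> dom_pow D A n'" using x Suc by auto
    obtain \<delta> where \<delta>: "\<delta> > 0" "\<forall>s\<in>Tint \<tau>. s < \<delta> \<longrightarrow> p (S s (A x)) \<le> \<epsilon> * s ^ n'"
      using SL[of n'] Suc Ax pP e by blast
    show ?thesis
    proof (intro exI[of _ \<delta>] conjI ballI impI)
      fix s assume s: "s \<in> Tint \<tau>" "s < \<delta>"
      obtain J where J: "has_lcs_integral P (\<lambda>r. S r (A x)) 0 s J" using Jex[OF s(1)] by blast
      have "p J \<le> \<epsilon> * s ^ n' * s" by (rule bnd[OF J pP s(1) s(2) \<delta>(2)]) (use e in simp)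
      then show "p (S s x - (s ^ n / fact n) *\<^sub>R x) \<le> \<epsilon> * s ^ n"
        using Idn[OF xD s(1) J] Suc by (simp add: algebra_simps)
    qed (rule \<delta>(1))
  qed
  have Sdp: "\<forall>x t. x \<in> dom_pow D A m \<longrightarrow> t \<in> Tint \<tau> \<longrightarrow> S t x \<in> dom_pow D A m" for m
  proof (induction m)
    case 0 then show ?case by simp
  next
    case (Suc m)
    show ?case
    proof (intro allI impI)
      fix x t assume x: "x \<in> dom_pow D A (Suc m)" and t: "t \<in> Tint \<tau>"
      then have "x \<in> D" "A x \<in> dom_pow D A m" by auto
      then show "S t x \<in> dom_pow D A (Suc m)" using L4[OF t] Suc.IH t by simp
    qed
  qed
  show ?thesis
  proof (rule conclude)
    fix m assume mn: "m \<ge> n"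
    show "dom_pow D A m \<subseteq> lcs_top P closure_of dom_pow D A (Suc m)"
    proof
      fix x assume x: "x \<in> dom_pow D A m"
      have xn: "x \<in> dom_pow D A n" using dp_mono[OF mn, of D A] x by blast
      define K where "K t = (SOME I. has_lcs_integral P (\<lambda>s. S s x) 0 t I \<and> I \<in> D
          \<and> A I = S t x - (t ^ n / fact n) *\<^sub>R x)" for t
      have K: "has_lcs_integral P (\<lambda>s. S s x) 0 t (K t) \<and> K t \<in> D \<and> A (K t) = S t x - (t ^ n / fact n) *\<^sub>R x"
        if "t \<in> Tint \<tau>" for t
        unfolding K_def by (rule someI_ex) (rule L5[OF that])
      have Kdp: "K t \<in> dom_pow D A (Suc m)" if t: "t \<in> Tint \<tau>" for t
      proof (rule dp_SucI)
        show "K t \<in> D" using K[OF t] by blast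
        have "S t x - (t ^ n / fact n) *\<^sub>R x \<in> dom_pow D A m"
          using dp_diff[OF cl Sdp[rule_format, OF x t] dp_scale[OF cl x]] .
        then show "A (K t) \<in> dom_pow D A m" using K[OF t] by simp
      qed
      have lim: "limitin (lcs_top P) (\<lambda>t. (fact (Suc n) / t ^ Suc n) *\<^sub>R K t) x (at_right 0)"
      proof (rule limit_lemma[OF sn t0])
        fix p and \<epsilon> :: real assume pP: "p \<in> P" and e: "\<epsilon> > 0"
        obtain \<delta> where \<delta>: "\<delta> > 0" "\<forall>s\<in>Tint \<tau>. s < \<delta> \<longrightarrow> p (S s x - (s ^ n / fact n) *\<^sub>R x) \<le> \<epsilon> * s ^ n"
          using E[OF xn pP e] by blast
        show "\<exists>\<delta>>0. \<forall>t\<in>Tint \<tau>. 0 < t \<and> t < \<delta> \<longrightarrow> p (K t - (t ^ Suc n / fact (Suc n)) *\<^sub>R x) \<le> \<epsilon> * t ^ Suc n"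
        proof (intro exI[of _ \<delta>] conjI ballI impI)
          fix t assume t: "t \<in> Tint \<tau>" and tt: "0 < t \<and> t < \<delta>"
          have hd: "has_lcs_integral P (\<lambda>s. S s x - (s ^ n / fact n) *\<^sub>R x) 0 t (K t - (t ^ Suc n / fact (Suc n)) *\<^sub>R x)"
            using hli_diff[OF sn conjunct1[OF K[OF t]] hli_poly[OF sc, of t n x]] tt by simp
          have "p (K t - (t ^ Suc n / fact (Suc n)) *\<^sub>R x) \<le> (\<epsilon> * t ^ n) * (t - 0)"
          proof (rule hli_bound[OF _ pP hd])
            show "seminorm p" using sn pP by blast
            show "0 \<le> t" using tt by simp
            fix s assume s: "s \<in> {0..t}"
            then have "s \<in> Tint \<tau>" "s < \<delta>" using Tint_sub[OF t] tt by auto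
            then have "p (S s x - (s ^ n / fact n) *\<^sub>R x) \<le> \<epsilon> * s ^ n" using \<delta>(2) by blast
            also have "\<dots> \<le> \<epsilon> * t ^ n" using s e by (intro mult_left_mono power_mono) auto
            finally show "p (S s x - (s ^ n / fact n) *\<^sub>R x) \<le> \<epsilon> * t ^ n" .
          qed
          then show "p (K t - (t ^ Suc n / fact (Suc n)) *\<^sub>R x) \<le> \<epsilon> * t ^ Suc n" by (simp add: algebra_simps)
        qed (rule \<delta>(1))
      qed
      have "eventually (\<lambda>t. t \<in> {0<..<t0}) (at_right (0::real))"
        by (rule eventually_at_right_real) (use t0 in simp)
      then have "eventually (\<lambda>t. (fact (Suc n) / t ^ Suc n) *\<^sub>R K t \<in> dom_pow D A (Suc m)) (at_right 0)"
      proof (rule eventually_mono)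
        fix t :: real assume "t \<in> {0<..<t0}"
        then have "t \<in> Tint \<tau>" using Tint_down[OF t0(1), of t] by auto
        then show "(fact (Suc n) / t ^ Suc n) *\<^sub>R K t \<in> dom_pow D A (Suc m)" using dp_scale[OF cl Kdp] by blast
      qed
      then show "x \<in> lcs_top P closure_of dom_pow D A (Suc m)" by (rule closure_from_limit[OF lim])
    qed
  qed
qed


section \<open>Part (i)\<close>

definition ifun :: "('a::real_vector \<Rightarrow> real) set \<Rightarrow> (real \<Rightarrow> 'a) \<Rightarrow> real \<Rightarrow> 'a" where
  "ifun P u t = (SOME I. has_lcs_integral P u 0 t I)"

lemma ifun_hli:
  assumes sc: "sc_lcs P" and c: "continuous_map (subtopology euclideanreal (Tint \<tau>)) (lcs_top P) u"
    and t: "t \<in> Tint \<tau>"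
  shows "has_lcs_integral P u 0 t (ifun P u t)"
  unfolding ifun_def by (rule someI_ex) (rule hli_exists[OF sc c Tint_sub[OF t] Tint_nonneg[OF t]])

lemma ifun_cont:
  assumes sc: "sc_lcs P" and c: "continuous_map (subtopology euclideanreal (Tint \<tau>)) (lcs_top P) u"
  shows "continuous_map (subtopology euclideanreal (Tint \<tau>)) (lcs_top P) (ifun P u)"
  by (rule intfun_cont[OF sc c]) (rule ifun_hli[OF sc c])

lemma mild_cont: "mild_solution P D A \<tau> x u \<Longrightarrow> continuous_map (subtopology euclideanreal (Tint \<tau>)) (lcs_top P) u"
  unfolding mild_solution_def by blast

lemma mild_props:
  assumes sc: "sc_lcs P" and m: "mild_solution P D A \<tau> x u" and t: "t \<in> Tint \<tau>"
  shows "ifun P u t \<in> D \<and> A (ifun P u t) = u t - x"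
proof -
  obtain I where I: "has_lcs_integral P u 0 t I" "I \<in> D" "A I = u t - x"
    using m t unfolding mild_solution_def by blast
  have "I = ifun P u t" by (rule hli_unique[OF sc I(1) ifun_hli[OF sc mild_cont[OF m] t]])
  then show ?thesis using I by simp
qed

lemma mild_zero:
  assumes sc: "sc_lcs P" and cl: "closed_linear_op P D A" and tau: "0 < \<tau>" and m: "mild_solution P D A \<tau> x u"
  shows "u 0 = x"
proof -
  have sn: "\<forall>p\<in>P. seminorm p" using sc sc_lcs_def by blast
  have T0: "0 \<in> Tint \<tau>" by (rule Tint_zero[OF tau])
  have "ifun P u 0 = 0" by (rule hli_unique[OF sc ifun_hli[OF sc mild_cont[OF m] T0] hli_point[OF sn]])
  then show ?thesis using mild_props[OF sc m T0] clo_zero[OF cl] by simp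
qed

lemma cont_add_const:
  assumes sn: "\<forall>p\<in>P. seminorm p" and c: "continuous_map (subtopology euclideanreal T) (lcs_top P) F"
  shows "continuous_map (subtopology euclideanreal T) (lcs_top P) (\<lambda>t. y + F t)"
proof (rule cont_lcsI[OF sn])
  fix s p and e :: real assume "s \<in> T" "p \<in> P" "e > 0"
  then show "\<exists>d>0. \<forall>s'\<in>T. \<bar>s' - s\<bar> < d \<longrightarrow> p (y + F s' - (y + F s)) < e"
    using cont_sn[OF sn c] by simp
qed

lemma hli_const:
  assumes sc: "sc_lcs P" and t: "0 \<le> t"
  shows "has_lcs_integral P (\<lambda>s. x) 0 t (t *\<^sub>R x)"
  using hli_poly[OF sc t, of 0 x] by simp

lemma part1:
  assumes sc: "sc_lcs P" and cl: "closed_linear_op P D A" and tau: "0 < \<tau>"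
    and H: "\<forall>x\<in>dom_pow D A n. unique_mild_solution P D A \<tau> x"
  shows "stationary_dense P D A \<and> n_index P D A \<le> n"
proof -
  have sn: "\<forall>p\<in>P. seminorm p" using sc sc_lcs_def by blast
  have sub: "subspace D" by (rule clo_D(1)[OF cl])
  have T0: "0 \<in> Tint \<tau>" by (rule Tint_zero[OF tau])
  obtain t0 where t0: "t0 \<in> Tint \<tau>" "0 < t0" using Tint_right[OF T0] by blast
  define U where "U x = (SOME u. mild_solution P D A \<tau> x u \<and>
      (\<forall>v. mild_solution P D A \<tau> x v \<longrightarrow> (\<forall>t\<in>Tint \<tau>. v t = u t)))" for x
  have U: "mild_solution P D A \<tau> x (U x) \<and> (\<forall>v. mild_solution P D A \<tau> x v \<longrightarrow> (\<forall>t\<in>Tint \<tau>. v t = U x t))"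
    if x: "x \<in> dom_pow D A n" for x
  proof -
    have "\<exists>u. mild_solution P D A \<tau> x u \<and> (\<forall>v. mild_solution P D A \<tau> x v \<longrightarrow> (\<forall>t\<in>Tint \<tau>. v t = u t))"
      using H x unfolding unique_mild_solution_def by blast
    then show ?thesis unfolding U_def by (rule someI_ex)
  qed
  have Tsub: "s \<in> Tint \<tau>" if "t \<in> Tint \<tau>" "s \<in> {0..t}" for s t using Tint_sub[OF that(1)] that(2) by blast
  have Step1: "\<forall>x. x \<in> dom_pow D A (n + k) \<longrightarrow> (\<forall>t\<in>Tint \<tau>. U x t \<in> dom_pow D A k)" for k
  proof (induction k)
    case 0 then show ?case by simp
  next
    case (Suc k)
    show ?case
    proof (intro allI impI ballI)
      fix x t assume x: "x \<in> dom_pow D A (n + Suc k)" and t: "t \<in> Tint \<tau>"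
      have xD: "x \<in> D" and Ax: "A x \<in> dom_pow D A (n + k)" using x by auto
      have xn: "x \<in> dom_pow D A n" using dp_mono[of n "n + Suc k" D A] x by auto
      have Axn: "A x \<in> dom_pow D A n" using dp_mono[of n "n + k" D A] Ax by auto
      define v where "v = U (A x)"
      have mv: "mild_solution P D A \<tau> (A x) v" using U[OF Axn] by (simp add: v_def)
      have cv: "continuous_map (subtopology euclideanreal (Tint \<tau>)) (lcs_top P) v" by (rule mild_cont[OF mv])
      define F where "F = ifun P v"
      have cF: "continuous_map (subtopology euclideanreal (Tint \<tau>)) (lcs_top P) F"
        unfolding F_def by (rule ifun_cont[OF sc cv])
      have Fp: "F s \<in> D \<and> A (F s) = v s - A x" if "s \<in> Tint \<tau>" for s
        unfolding F_def by (rule mild_props[OF sc mv that])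
      define w where "w t = x + F t" for t
      have mw: "mild_solution P D A \<tau> x w"
        unfolding mild_solution_def
      proof (intro conjI ballI)
        show "continuous_map (subtopology euclideanreal (Tint \<tau>)) (lcs_top P) w"
          unfolding w_def by (rule cont_add_const[OF sn cF])
        fix t assume t: "t \<in> Tint \<tau>"
        have t0': "0 \<le> t" by (rule Tint_nonneg[OF t])
        define G where "G = ifun P F t"
        have hG: "has_lcs_integral P F 0 t G" unfolding G_def by (rule ifun_hli[OF sc cF t])
        have hAF: "has_lcs_integral P (\<lambda>s. A (F s)) 0 t (F t - t *\<^sub>R A x)"
        proof (rule hli_cong)
          show "has_lcs_integral P (\<lambda>s. v s - A x) 0 t (F t - t *\<^sub>R A x)"
            by (rule hli_diff[OF sn _ hli_const[OF sc t0']]) (unfold F_def, rule ifun_hli[OF sc cv t])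
          fix s assume "s \<in> {0..t}"
          then show "v s - A x = A (F s)" using Fp[OF Tsub[OF t]] by simp
        qed
        have GD: "G \<in> D \<and> A G = F t - t *\<^sub>R A x"
          by (rule hli_closed[OF sc cl _ hG hAF]) (use Fp Tsub[OF t] in blast)
        have txD: "t *\<^sub>R x \<in> D" using subspace_scale[OF sub xD] .
        have hI: "has_lcs_integral P w 0 t (t *\<^sub>R x + G)"
          unfolding w_def by (rule hli_add[OF sn hli_const[OF sc t0'] hG])
        moreover have "t *\<^sub>R x + G \<in> D" using subspace_add[OF sub txD] GD by blast
        moreover have "A (t *\<^sub>R x + G) = w t - x"
          using clo_D(2)[OF cl txD, of G] GD clo_D(3)[OF cl xD, of t] by (simp add: w_def)
        ultimately show "\<exists>I. has_lcs_integral P w 0 t I \<and> I \<in> D \<and> A I = w t - x" by blast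
      qed
      have "U x t = w t" using U[OF xn] mw t by metis
      moreover have "w t \<in> dom_pow D A (Suc k)"
        unfolding w_def
      proof (rule dp_add[OF cl])
        show "x \<in> dom_pow D A (Suc k)" using dp_mono[of "Suc k" "n + Suc k" D A] x by auto
        have "v t \<in> dom_pow D A k" using Suc.IH Ax t by (simp add: v_def)
        moreover have "A x \<in> dom_pow D A k" using dp_mono[of k "n + k" D A] Ax by auto
        ultimately have "A (F t) \<in> dom_pow D A k" using Fp[OF t] dp_diff[OF cl] by simp
        then show "F t \<in> dom_pow D A (Suc k)" using Fp[OF t] by simp
      qed
      ultimately show "U x t \<in> dom_pow D A (Suc k)" by simp
    qed
  qed
  show ?thesis
  proof (rule conclude)
    fix m assume mn: "m \<ge> n"
    show "dom_pow D A m \<subseteq> lcs_top P closure_of dom_pow D A (Suc m)"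
    proof
      fix x assume x: "x \<in> dom_pow D A m"
      have xn: "x \<in> dom_pow D A n" using dp_mono[OF mn, of D A] x by blast
      define u where "u = U x"
      have mu: "mild_solution P D A \<tau> x u" using U[OF xn] by (simp add: u_def)
      have cu: "continuous_map (subtopology euclideanreal (Tint \<tau>)) (lcs_top P) u" by (rule mild_cont[OF mu])
      have u0: "u 0 = x" by (rule mild_zero[OF sc cl tau mu])
      define It where "It = rec_nat u (\<lambda>j g. ifun P g)"
      have It0: "It 0 = u" and ItS: "It (Suc j) = ifun P (It j)" for j by (simp_all add: It_def)
      have C: "continuous_map (subtopology euclideanreal (Tint \<tau>)) (lcs_top P) (It j)" for j
      proof (induction j)
        case 0 then show ?case using cu It0 by simp
      next
        case (Suc j) then show ?case unfolding ItS by (rule ifun_cont[OF sc])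
      qed
      have Hj: "has_lcs_integral P (It j) 0 t (It (Suc j) t)" if "t \<in> Tint \<tau>" for j t
        unfolding ItS by (rule ifun_hli[OF sc C that])
      have R: "\<forall>t\<in>Tint \<tau>. It (Suc j) t \<in> D \<and> A (It (Suc j) t) = It j t - (t ^ j / fact j) *\<^sub>R x" for j
      proof (induction j)
        case 0
        show ?case using mild_props[OF sc mu] by (simp add: It0 ItS)
      next
        case (Suc j)
        show ?case
        proof
          fix t assume t: "t \<in> Tint \<tau>"
          have t0': "0 \<le> t" by (rule Tint_nonneg[OF t])
          have hA: "has_lcs_integral P (\<lambda>s. A (It (Suc j) s)) 0 t (It (Suc j) t - (t ^ Suc j / fact (Suc j)) *\<^sub>R x)"
          proof (rule hli_cong)
            show "has_lcs_integral P (\<lambda>s. It j s - (s ^ j / fact j) *\<^sub>R x) 0 t (It (Suc j) t - (t ^ Suc j / fact (Suc j)) *\<^sub>R x)"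
              by (rule hli_diff[OF sn Hj[OF t] hli_poly[OF sc t0']])
            fix s assume "s \<in> {0..t}"
            then show "It j s - (s ^ j / fact j) *\<^sub>R x = A (It (Suc j) s)" using Suc.IH Tsub[OF t] by simp
          qed
          show "It (Suc (Suc j)) t \<in> D \<and> A (It (Suc (Suc j)) t) = It (Suc j) t - (t ^ Suc j / fact (Suc j)) *\<^sub>R x"
            by (rule hli_closed[OF sc cl _ Hj[OF t] hA]) (use Suc.IH Tsub[OF t] in blast)
        qed
      qed
      have M: "j \<le> Suc n \<longrightarrow> (\<forall>t\<in>Tint \<tau>. It j t \<in> dom_pow D A (m - n + j))" for j
      proof (induction j)
        case 0
        have "x \<in> dom_pow D A (n + (m - n))" using x mn by simp
        then show ?case using Step1[of "m - n"] by (simp add: It0 u_def)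
      next
        case (Suc j)
        show ?case
        proof (intro impI ballI)
          fix t assume j: "Suc j \<le> Suc n" and t: "t \<in> Tint \<tau>"
          have "It j t \<in> dom_pow D A (m - n + j)" using Suc.IH j t by simp
          moreover have "x \<in> dom_pow D A (m - n + j)"
          proof -
            have "m - n + j \<le> m" using j mn by simp
            then show ?thesis using dp_mono[of "m - n + j" m D A] x by blast
          qed
          ultimately have "It j t - (t ^ j / fact j) *\<^sub>R x \<in> dom_pow D A (m - n + j)"
            using dp_diff[OF cl] dp_scale[OF cl] by blast
          then show "It (Suc j) t \<in> dom_pow D A (m - n + Suc j)" using R[of j] t by simp
        qed
      qed
      have Kdp: "It (Suc n) t \<in> dom_pow D A (Suc m)" if "t \<in> Tint \<tau>" for t
        using M[of "Suc n"] that mn by simp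
      have lim: "limitin (lcs_top P) (\<lambda>t. (fact (Suc n) / t ^ Suc n) *\<^sub>R It (Suc n) t) x (at_right 0)"
      proof (rule limit_lemma[OF sn t0])
        fix p and \<epsilon> :: real assume pP: "p \<in> P" and e: "\<epsilon> > 0"
        obtain \<delta> where \<delta>: "\<delta> > 0" "\<forall>s'\<in>Tint \<tau>. \<bar>s' - 0\<bar> < \<delta> \<longrightarrow> p (u s' - u 0) < \<epsilon>"
          using cont_sn[OF sn cu T0 pP e] by blast
        have B: "\<forall>s\<in>Tint \<tau>. s < \<delta> \<longrightarrow> p (It j s - (s ^ j / fact j) *\<^sub>R x) \<le> \<epsilon> * s ^ j" for j
        proof (induction j)
          case 0
          show ?case
          proof (intro ballI impI)
            fix s assume s: "s \<in> Tint \<tau>" "s < \<delta>"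
            then have "\<bar>s - 0\<bar> < \<delta>" using Tint_nonneg[OF s(1)] by simp
            then have "p (u s - u 0) < \<epsilon>" using \<delta>(2) s(1) by blast
            then show "p (It 0 s - (s ^ 0 / fact 0) *\<^sub>R x) \<le> \<epsilon> * s ^ 0" using u0 by (simp add: It0)
          qed
        next
          case (Suc j)
          show ?case
          proof (intro ballI impI)
            fix s assume s: "s \<in> Tint \<tau>" "s < \<delta>"
            have s0: "0 \<le> s" by (rule Tint_nonneg[OF s(1)])
            have hd: "has_lcs_integral P (\<lambda>r. It j r - (r ^ j / fact j) *\<^sub>R x) 0 s (It (Suc j) s - (s ^ Suc j / fact (Suc j)) *\<^sub>R x)"
              by (rule hli_diff[OF sn Hj[OF s(1)] hli_poly[OF sc s0]])
            have "p (It (Suc j) s - (s ^ Suc j / fact (Suc j)) *\<^sub>R x) \<le> (\<epsilon> * s ^ j) * (s - 0)"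
            proof (rule hli_bound[OF _ pP hd s0])
              show "seminorm p" using sn pP by blast
              fix r assume r: "r \<in> {0..s}"
              then have "r \<in> Tint \<tau>" "r < \<delta>" using Tsub[OF s(1)] s(2) by auto
              then have "p (It j r - (r ^ j / fact j) *\<^sub>R x) \<le> \<epsilon> * r ^ j" using Suc.IH by blast
              also have "\<dots> \<le> \<epsilon> * s ^ j" using r e by (intro mult_left_mono power_mono) auto
              finally show "p (It j r - (r ^ j / fact j) *\<^sub>R x) \<le> \<epsilon> * s ^ j" .
            qed
            then show "p (It (Suc j) s - (s ^ Suc j / fact (Suc j)) *\<^sub>R x) \<le> \<epsilon> * s ^ Suc j"
              by (simp add: algebra_simps)
          qed
        qed
        show "\<exists>\<delta>>0. \<forall>t\<in>Tint \<tau>. 0 < t \<and> t < \<delta> \<longrightarrow> p (It (Suc n) t - (t ^ Suc n / fact (Suc n)) *\<^sub>R x) \<le> \<epsilon> * t ^ Suc n"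
          using B[of "Suc n"] \<delta>(1) by blast
      qed
      have "eventually (\<lambda>t. t \<in> {0<..<t0}) (at_right (0::real))"
        by (rule eventually_at_right_real) (use t0 in simp)
      then have "eventually (\<lambda>t. (fact (Suc n) / t ^ Suc n) *\<^sub>R It (Suc n) t \<in> dom_pow D A (Suc m)) (at_right 0)"
      proof (rule eventually_mono)
        fix t :: real assume "t \<in> {0<..<t0}"
        then have "t \<in> Tint \<tau>" using Tint_down[OF t0(1), of t] by auto
        then show "(fact (Suc n) / t ^ Suc n) *\<^sub>R It (Suc n) t \<in> dom_pow D A (Suc m)" using dp_scale[OF cl Kdp] by blast
      qed
      then show "x \<in> lcs_top P closure_of dom_pow D A (Suc m)" by (rule closure_from_limit[OF lim])
    qed
  qed
qed

theorem proposition2p3: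
  fixes P :: "('a::real_vector \<Rightarrow> real) set"
    and D :: "'a set" and A :: "'a \<Rightarrow> 'a"
    and \<tau> :: ereal and n :: nat
  assumes "sc_lcs P"
    and "closed_linear_op P D A"
    and "0 < \<tau>"
  shows "((\<forall>x\<in>dom_pow D A n. unique_mild_solution P D A \<tau> x)
            \<longrightarrow> stationary_dense P D A \<and> n_index P D A \<le> n)
       \<and> ((\<exists>S. loc_equicont_int_semigroup P D A \<tau> n S)
            \<longrightarrow> stationary_dense P D A \<and> n_index P D A \<le> n)"
  using part1[OF assms] part2[OF assms] by blast

end
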